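(* Let the standing assumptions (listed in the context) hold and let $(x_k)$ be generated by Algorithm SLBFGS. Then there are constants $c,C>0$ such that $c\cdot\min\{1,\|\nabla\mathcal{J}(x_k)\|^{c_2}\}\le\frac{\|d_k\|}{\|\nabla\mathcal{J}(x_k)\|}\le C\cdot\max\{1,\|\nabla\mathcal{J}(x_k)\|^{-c_2}\}$ as well as $\frac{|\nabla\mathcal{J}(x_k)^Td_k|}{\|d_k\|}\ge C^{-1}\|\nabla\mathcal{J}(x_k)\|\min\{1,\|\nabla\mathcal{J}(x_k)\|^{2c_2}\}$ for all $k\ge0$.
   Context: Let $\mathcal{X}$ be a Hilbert space and $\mathcal{J}:\mathcal{X}\to\mathbb{R}$. Algorithm SLBFGS (structured inverse L-BFGS): inputs $x_0\in\mathcal{X}$, $\epsilon\geq0$, $\ell\in\mathbb{N}_0$, $c_0\geq 0$, $C_0\in[c_0,\infty]$, $c_s,c_1,c_2>0$; let $\tau_0>0$. For $k=0,1,2,\ldots$: let $m=\max\{0,k-\ell\}$; choose a symmetric positive semi-definite bounded linear operator $S_k$; set $B_k^{(0)}=\tau_k I+S_k$; let $B_k$ be obtained from $B_k^{(0)}$ and the currently stored pairs $(s_j,y_j)$, $m\le j\le k-1$, by successive L-BFGS updates $B\mapsto B+\frac{yy^T}{y^Ts}-\frac{Bss^TB}{s^TBs}$; set $d_k=-B_k^{-1}\nabla\mathcal{J}(x_k)$; compute a step length $\alpha_k>0$ by a line search; set $s_k=\alpha_kd_k$, $x_{k+1}=x_k+s_k$, $y_k=\nabla\mathcal{J}(x_{k+1})-\nabla\mathcal{J}(x_k)$;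 store $(s_k,y_k)$ only if $y_k^Ts_k>c_s\|s_k\|^2$; if $k\ge\ell$ remove $(s_m,y_m)$ from storage; stop with output $x_{k+1}$ if $\|\nabla\mathcal{J}(x_{k+1})\|\le\epsilon$; set $z_k=y_k-S_{k+1}s_k$, $\omega^l_{k+1}=\min\{c_0,c_1\|\nabla\mathcal{J}(x_{k+1})\|^{c_2}\}$, $\omega^u_{k+1}=\max\{C_0,(c_1\|\nabla\mathcal{J}(x_{k+1})\|^{c_2})^{-1}\}$; with $P(t)=\min\{\max\{t,\omega^l_{k+1}\},\omega^u_{k+1}\}$ and $\rho=z_k^Ts_k$ let $\tau^s=P(\rho/\|s_k\|^2)$, $\tau^g=P(\|z_k\|/\|s_k\|)$, $\tau^z=P(\|z_k\|^2/\rho)$; if $\rho>0$ choose $\tau_{k+1}\in[\tau^s,\tau^z]$, else choose $\tau_{k+1}\in[\tau^s,\tau^g]$. Line searches: Armijo with backtracking means, for fixed $\beta,\sigma\in(0,1)$, $\alpha_k$ is the largest number in $\{1,\beta,\beta^2,\ldots\}$ with $\mathcal{J}(x_{k+1})\le\mathcal{J}(x_k)+\alpha_k\sigma\nabla\mathcal{J}(x_k)^Td_k$; the Wolfe–Powell conditions are this Armijo inequality together with $\nabla\mathcal{J}(x_{k+1})^Td_k\ge\eta\nabla\mathcal{J}(x_k)^Td_k$ for fixed $\eta\in(\sigma,1)$. Let $\Omega=\{x:\mathcal{J}(x)\le\mathcal{J}(x_0)\}$ and $\Omega_\delta=\{x:\exists\hat x\in\Omega,\ \|x-\hat x\|<\delta\}$.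 Standing assumptions: 1) $\mathcal{J}$ is continuously differentiable and bounded below; 2) $\nabla\mathcal{J}$ is Lipschitz continuous on $\Omega$ with constant $L>0$; 3) $(\|S_k\|)$ is bounded; 4) the step sizes consistently satisfy the Armijo condition computed by backtracking, or consistently satisfy the Wolfe–Powell conditions; in the Armijo case there is $\delta>0$ such that $\mathcal{J}$ or $\nabla\mathcal{J}$ is uniformly continuous on $\Omega_\delta$; 5) $c_0=0$ is only chosen if then $\sup_k\|(B_k^{(0)})^{-1}\|<\infty$; 6) $C_0=\infty$ is only chosen if either the interval $[\tau^s,\tau^z]$ is replaced by $[\tau^s,\tau^g]$, or $\mathcal{J}$ is twice continuously differentiable, $\overline{G_k}:=\int_0^1\nabla^2\mathcal{J}(x_k+ts_k)\,dt-S_{k+1}$ is symmetric positive semi-definite for all $k$ and $(\|\overline{G_k}\|)$ is bounded. *)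

theory Defs
  imports "HOL-Analysis.Analysis"
begin

definition lbfgs_update :: "('a::real_inner \<Rightarrow> 'a) \<Rightarrow> 'a \<Rightarrow> 'a \<Rightarrow> ('a \<Rightarrow> 'a)" where
  "lbfgs_update B s y =
     (\<lambda>v. B v + ((y \<bullet> v) / (y \<bullet> s)) *\<^sub>R y - ((s \<bullet> B v) / (s \<bullet> B s)) *\<^sub>R B s)"

definition stored_pairs :: "real \<Rightarrow> nat \<Rightarrow> (nat \<Rightarrow> 'a::real_inner) \<Rightarrow> (nat \<Rightarrow> 'a) \<Rightarrow> nat \<Rightarrow> nat list" where
  "stored_pairs cs ell s y k = filter (\<lambda>j. cs * (norm (s j))\<^sup>2 < y j \<bullet> s j) [k - ell ..< k]"

definition slbfgs_B0 :: "(nat \<Rightarrow> real) \<Rightarrow> (nat \<Rightarrow> 'a::real_normed_vector \<Rightarrow>\<^sub>L 'a) \<Rightarrow> nat \<Rightarrow> 'a \<Rightarrow> 'a" where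
  "slbfgs_B0 tau S k = (\<lambda>v. tau k *\<^sub>R v + blinfun_apply (S k) v)"

definition step_s :: "(nat \<Rightarrow> 'a::real_vector) \<Rightarrow> nat \<Rightarrow> 'a" where
  "step_s x j = x (Suc j) - x j"

definition step_y :: "('a \<Rightarrow> 'a::real_vector) \<Rightarrow> (nat \<Rightarrow> 'a) \<Rightarrow> nat \<Rightarrow> 'a" where
  "step_y g x j = g (x (Suc j)) - g (x j)"

definition slbfgs_B :: "real \<Rightarrow> nat \<Rightarrow> ('a::real_inner \<Rightarrow> 'a) \<Rightarrow> (nat \<Rightarrow> 'a) \<Rightarrow> (nat \<Rightarrow> real)
    \<Rightarrow> (nat \<Rightarrow> 'a \<Rightarrow>\<^sub>L 'a) \<Rightarrow> nat \<Rightarrow> 'a \<Rightarrow> 'a" where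
  "slbfgs_B cs ell g x tau S k =
     foldl (\<lambda>B j. lbfgs_update B (step_s x j) (step_y g x j)) (slbfgs_B0 tau S k)
           (stored_pairs cs ell (step_s x) (step_y g x) k)"

definition omega_l :: "real \<Rightarrow> real \<Rightarrow> real \<Rightarrow> real \<Rightarrow> real" where
  "omega_l c0 c1 c2 gn = min c0 (c1 * gn powr c2)"

definition omega_u :: "ereal \<Rightarrow> real \<Rightarrow> real \<Rightarrow> real \<Rightarrow> ereal" where
  "omega_u C0 c1 c2 gn = max C0 (ereal (inverse (c1 * gn powr c2)))"

definition projP :: "real \<Rightarrow> ereal \<Rightarrow> real \<Rightarrow> real \<Rightarrow> real \<Rightarrow> real \<Rightarrow> real" where
  "projP c0 C0 c1 c2 gn t =
     real_of_ereal (min (ereal (max t (omega_l c0 c1 c2 gn))) (omega_u C0 c1 c2 gn))"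

definition tau_s :: "real \<Rightarrow> ereal \<Rightarrow> real \<Rightarrow> real \<Rightarrow> real \<Rightarrow> 'a::real_inner \<Rightarrow> 'a \<Rightarrow> real" where
  "tau_s c0 C0 c1 c2 gn s z = projP c0 C0 c1 c2 gn ((z \<bullet> s) / (norm s)\<^sup>2)"

definition tau_g :: "real \<Rightarrow> ereal \<Rightarrow> real \<Rightarrow> real \<Rightarrow> real \<Rightarrow> 'a::real_inner \<Rightarrow> 'a \<Rightarrow> real" where
  "tau_g c0 C0 c1 c2 gn s z = projP c0 C0 c1 c2 gn (norm z / norm s)"

definition tau_z :: "real \<Rightarrow> ereal \<Rightarrow> real \<Rightarrow> real \<Rightarrow> real \<Rightarrow> 'a::real_inner \<Rightarrow> 'a \<Rightarrow> real" where
  "tau_z c0 C0 c1 c2 gn s z = projP c0 C0 c1 c2 gn ((norm z)\<^sup>2 / (z \<bullet> s))"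

definition tau_admissible :: "real \<Rightarrow> ereal \<Rightarrow> real \<Rightarrow> real \<Rightarrow> real \<Rightarrow> 'a::real_inner \<Rightarrow> 'a \<Rightarrow> real \<Rightarrow> bool" where
  "tau_admissible c0 C0 c1 c2 gn s z t \<longleftrightarrow>
     tau_s c0 C0 c1 c2 gn s z \<le> t \<and>
     t \<le> (if z \<bullet> s > 0 then tau_z c0 C0 c1 c2 gn s z else tau_g c0 C0 c1 c2 gn s z)"

definition armijo :: "('a::real_inner \<Rightarrow> real) \<Rightarrow> ('a \<Rightarrow> 'a) \<Rightarrow> real \<Rightarrow> 'a \<Rightarrow> 'a \<Rightarrow> real \<Rightarrow> bool" where
  "armijo J g \<sigma> x d a \<longleftrightarrow> J (x + a *\<^sub>R d) \<le> J x + a * \<sigma> * (g x \<bullet> d)"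

definition sym_psd :: "('a::real_inner \<Rightarrow>\<^sub>L 'a) \<Rightarrow> bool" where
  "sym_psd A \<longleftrightarrow> (\<forall>u v. blinfun_apply A u \<bullet> v = u \<bullet> blinfun_apply A v) \<and>
                  (\<forall>u. 0 \<le> blinfun_apply A u \<bullet> u)"

end

theory Submission
  imports Defs
begin


definition inv_op :: "('a::real_inner \<Rightarrow> 'a) \<Rightarrow> real \<Rightarrow> real \<Rightarrow> bool" where
  "inv_op B mu La \<longleftrightarrow> linear B \<and> (\<forall>u v. B u \<bullet> v = u \<bullet> B v) \<and>
     (\<forall>u. mu * (norm u)\<^sup>2 \<le> u \<bullet> B u) \<and> (\<forall>u. norm (B u) \<le> La * norm u) \<and> 0 < mu \<and> 0 \<le> La"

lemma psd_cs:
  fixes B :: "'a::real_inner \<Rightarrow> 'a"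
  assumes lin: "linear B" and sym: "\<forall>u v. B u \<bullet> v = u \<bullet> B v" and psd: "\<forall>u. 0 \<le> u \<bullet> B u"
  shows "(u \<bullet> B v)\<^sup>2 \<le> (u \<bullet> B u) * (v \<bullet> B v)"
proof -
  define a where "a = u \<bullet> B u"
  define b where "b = u \<bullet> B v"
  define c where "c = v \<bullet> B v"
  have vu: "v \<bullet> B u = b" using sym unfolding b_def by (metis inner_commute)
  have q: "0 \<le> a + 2*t*b + t\<^sup>2*c" for t
  proof -
    have "0 \<le> (u + t *\<^sub>R v) \<bullet> B (u + t *\<^sub>R v)" using psd by blast
    also have "\<dots> = a + 2*t*b + t\<^sup>2*c"
      using vu unfolding a_def b_def c_def
      by (simp add: linear_add[OF lin] linear_scale[OF lin] inner_add_left inner_add_right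
          algebra_simps power2_eq_square)
    finally show ?thesis .
  qed
  have c0: "0 \<le> c" unfolding c_def using psd by blast
  show ?thesis
  proof (cases "c = 0")
    case True
    have "b = 0"
    proof (rule ccontr)
      assume "b \<noteq> 0"
      have "0 \<le> a + 2*(-(a+1)/(2*b))*b" using q[of "-(a+1)/(2*b)"] True by simp
      also have "\<dots> = -1" using \<open>b \<noteq> 0\<close> by (simp add: field_simps)
      finally show False by simp
    qed
    then show ?thesis using True unfolding a_def b_def c_def by simp
  next
    case False
    then have cp: "0 < c" using c0 by simp
    have "0 \<le> a + 2*(-b/c)*b + (-b/c)\<^sup>2*c" using q by blast
    also have "\<dots> = a - b\<^sup>2/c" using cp by (simp add: field_simps power2_eq_square)
    finally have "b\<^sup>2/c \<le> a" by simp
    then have "b\<^sup>2 \<le> a * c" using cp by (simp add: field_simps)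
    then show ?thesis unfolding a_def b_def c_def .
  qed
qed

lemma psd_norm_sq:
  fixes B :: "'a::real_inner \<Rightarrow> 'a"
  assumes lin: "linear B" and sym: "\<forall>u v. B u \<bullet> v = u \<bullet> B v" and psd: "\<forall>u. 0 \<le> u \<bullet> B u"
    and bd: "\<forall>u. norm (B u) \<le> La * norm u" and La: "0 \<le> La"
  shows "(norm (B v))\<^sup>2 \<le> La * (v \<bullet> B v)"
proof -
  define w where "w = B v"
  have ww: "w \<bullet> w = v \<bullet> B w" using sym unfolding w_def by metis
  have cs: "(v \<bullet> B w)\<^sup>2 \<le> (v \<bullet> B v) * (w \<bullet> B w)" by (rule psd_cs[OF lin sym psd])
  have "w \<bullet> B w \<le> norm w * norm (B w)" by (rule Cauchy_Schwarz_ineq2[THEN abs_le_D1])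
  also have "\<dots> \<le> norm w * (La * norm w)" using bd by (simp add: mult_left_mono)
  finally have wb: "w \<bullet> B w \<le> La * (norm w)\<^sup>2" by (simp add: power2_eq_square algebra_simps)
  have "(v \<bullet> B v) * (w \<bullet> B w) \<le> (v \<bullet> B v) * (La * (norm w)\<^sup>2)"
    using psd wb by (simp add: mult_left_mono)
  with cs have "(w \<bullet> w)\<^sup>2 \<le> (v \<bullet> B v) * (La * (norm w)\<^sup>2)" using ww by simp
  moreover have "w \<bullet> w = (norm w)\<^sup>2" by (simp add: power2_norm_eq_inner)
  ultimately have "(norm w)\<^sup>2 * (norm w)\<^sup>2 \<le> (La * (v \<bullet> B v)) * (norm w)\<^sup>2"
    by (simp add: power2_eq_square algebra_simps)
  then have "(norm w)\<^sup>2 \<le> La * (v \<bullet> B v) \<or> norm w = 0"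
  proof -
    assume h: "(norm w)\<^sup>2 * (norm w)\<^sup>2 \<le> (La * (v \<bullet> B v)) * (norm w)\<^sup>2"
    show ?thesis
    proof (cases "norm w = 0")
      case False
      then have "0 < (norm w)\<^sup>2" by simp
      with h show ?thesis by (meson mult_le_cancel_right_pos)
    qed simp
  qed
  then show ?thesis using La psd unfolding w_def by auto
qed
lemma real_core:
  fixes mu cs L ns ys p t nv e :: real
  assumes mu: "0 < mu" and cs: "0 < cs" and L: "0 \<le> L" and ns: "0 < ns" and ys: "cs * ns\<^sup>2 \<le> ys"
   and p: "0 \<le> p" and nv: "0 \<le> nv" "nv \<le> p + \<bar>t\<bar> * ns" and e: "\<bar>e\<bar> \<le> L * ns * p"
  shows "(1/(2*(1+2*L/cs)\<^sup>2)) * min mu (cs/4) * nv\<^sup>2 \<le> mu * p\<^sup>2 + (e + t*ys)\<^sup>2/ys"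
proof -
  define q where "q = \<bar>t\<bar> * ns"
  define m where "m = min mu (cs/4)"
  define D where "D = (1+2*L/cs)\<^sup>2"
  have D1: "1 \<le> D" unfolding D_def using L cs by (simp add: one_le_power)
  have q0: "0 \<le> q" unfolding q_def using ns by simp
  have m0: "0 < m" unfolding m_def using mu cs by simp
  have ysp: "0 < ys" using ys cs ns by (smt (verit) mult_pos_pos zero_less_power)
  have nv2: "nv\<^sup>2 \<le> (p + q)\<^sup>2" using nv unfolding q_def by (simp add: power_mono)
  have "nv\<^sup>2 \<le> D*nv\<^sup>2" using mult_right_mono[OF D1, of "nv\<^sup>2"] by simp
  then have kle: "1/(2*D) * m * nv\<^sup>2 \<le> m * nv\<^sup>2 / 2" using D1 m0
    by (simp add: field_simps mult_left_mono)
  have Q0: "0 \<le> (e + t*ys)\<^sup>2/ys" using ysp by simp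
  show ?thesis
  proof (cases "2*L*ns*p \<le> \<bar>t\<bar>*ys")
    case True
    have "\<bar>t\<bar>*ys/2 \<le> \<bar>e + t*ys\<bar>"
    proof -
      have "\<bar>t*ys\<bar> - \<bar>e\<bar> \<le> \<bar>e + t*ys\<bar>" by linarith
      moreover have "\<bar>t*ys\<bar> = \<bar>t\<bar>*ys" using ysp by (simp add: abs_mult)
      ultimately show ?thesis using True e by linarith
    qed
    then have "(\<bar>t\<bar>*ys/2)\<^sup>2 \<le> \<bar>e + t*ys\<bar>\<^sup>2"
      by (rule power_mono) (use ysp in simp)
    then have "(\<bar>t\<bar>*ys/2)\<^sup>2 \<le> (e + t*ys)\<^sup>2" by simp
    then have "t\<^sup>2*ys\<^sup>2/4 \<le> (e + t*ys)\<^sup>2" by (simp add: power_mult_distrib power_divide)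
    then have a1: "t\<^sup>2*ys/4 \<le> (e + t*ys)\<^sup>2/ys" using ysp by (simp add: field_simps power2_eq_square)
    have "t\<^sup>2*(cs*ns\<^sup>2) \<le> t\<^sup>2*ys" using ys by (simp add: mult_left_mono)
    then have "cs/4*q\<^sup>2 \<le> t\<^sup>2*ys/4" unfolding q_def by (simp add: power_mult_distrib algebra_simps)
    with a1 have a2: "cs/4*q\<^sup>2 \<le> (e + t*ys)\<^sup>2/ys" by linarith
    have "m*p\<^sup>2 \<le> mu*p\<^sup>2" by (rule mult_right_mono) (auto simp: m_def)
    moreover have "m*q\<^sup>2 \<le> cs/4*q\<^sup>2" by (rule mult_right_mono) (auto simp: m_def)
    moreover have "(p+q)\<^sup>2 \<le> 2*(p\<^sup>2+q\<^sup>2)" by (smt (verit) power2_sum sum_squares_bound)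
    ultimately have "m * (p+q)\<^sup>2 / 2 \<le> mu * p\<^sup>2 + (e + t*ys)\<^sup>2/ys" using a2 m0
      by (smt (verit) mult_left_mono field_sum_of_halves distrib_left)
    moreover have "m * nv\<^sup>2 / 2 \<le> m * (p+q)\<^sup>2 / 2" using nv2 m0 by simp
    ultimately show ?thesis using kle unfolding D_def m_def by linarith
  next
    case False
    have "\<bar>t\<bar>*(cs*ns\<^sup>2) \<le> \<bar>t\<bar>*ys" using ys by (simp add: mult_left_mono)
    with False have "\<bar>t\<bar>*cs*ns*ns < 2*L*p*ns" by (simp add: power2_eq_square algebra_simps)
    then have "\<bar>t\<bar>*cs*ns < 2*L*p" using ns by simp
    then have "q * cs \<le> 2*L*p" unfolding q_def by (simp add: algebra_simps)
    then have "q \<le> 2*L/cs*p" using cs by (simp add: field_simps)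
    then have "p + q \<le> (1+2*L/cs)*p" by (simp add: algebra_simps)
    then have "nv \<le> (1+2*L/cs)*p" using nv unfolding q_def by linarith
    then have "nv\<^sup>2 \<le> ((1+2*L/cs)*p)\<^sup>2" using nv by (simp add: power_mono)
    then have "nv\<^sup>2 \<le> D*p\<^sup>2" unfolding D_def by (simp add: power_mult_distrib)
    then have "nv\<^sup>2/D \<le> p\<^sup>2" using D1 by (simp add: field_simps)
    then have "mu * (nv\<^sup>2/D) \<le> mu * p\<^sup>2" using mu by (intro mult_left_mono) auto
    moreover have "1/(2*D) * m * nv\<^sup>2 \<le> mu * (nv\<^sup>2/D)" using D1 m0 mu
    proof -
      have "m \<le> mu" unfolding m_def by simp
      then have "m * nv\<^sup>2 \<le> mu * nv\<^sup>2" by (simp add: mult_right_mono)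
      then have "m * nv\<^sup>2 / D \<le> mu * nv\<^sup>2 / D" using D1 by (intro divide_right_mono) auto
      moreover have "m * nv\<^sup>2 / (2*D) \<le> m * nv\<^sup>2 / D" using D1 m0
        by (intro divide_left_mono) auto
      ultimately have "m * nv\<^sup>2 / (2*D) \<le> mu * nv\<^sup>2 / D" by linarith
      then show ?thesis by simp
    qed
    ultimately show ?thesis using Q0 unfolding D_def m_def by linarith
  qed
qed
lemma update_inv:
  fixes B :: "'a::real_inner \<Rightarrow> 'a"
  assumes inv: "inv_op B mu La" and cs: "0 < cs" and L: "0 \<le> L"
    and ys: "cs * (norm s)\<^sup>2 < y \<bullet> s" and yL: "norm y \<le> L * norm s"
  shows "inv_op (lbfgs_update B s y) ((1/(2*(1+2*L/cs)\<^sup>2)) * min mu (cs/4)) (2*La + L\<^sup>2/cs)"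
proof -
  from inv have lin: "linear B" and sym: "\<forall>u v. B u \<bullet> v = u \<bullet> B v"
    and pos: "\<forall>u. mu * (norm u)\<^sup>2 \<le> u \<bullet> B u" and bd: "\<forall>u. norm (B u) \<le> La * norm u"
    and mu: "0 < mu" and La: "0 \<le> La" unfolding inv_op_def by auto
  have psd: "\<forall>u. 0 \<le> u \<bullet> B u" using pos mu by (meson order_trans mult_nonneg_nonneg zero_le_power2 less_imp_le)
  have s0: "s \<noteq> 0" using ys by auto
  then have ns: "0 < norm s" by simp
  define sig where "sig = s \<bullet> B s"
  have "0 < mu * (norm s)\<^sup>2" using mu ns by simp
  then have sigp: "0 < sig" unfolding sig_def using pos[rule_format, of s] by linarith
  define yy where "yy = y \<bullet> s"
  have "0 < cs * (norm s)\<^sup>2" using cs ns by simp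
  then have yyp: "0 < yy" unfolding yy_def using ys by linarith
  have Bn: "lbfgs_update B s y v = B v + ((y \<bullet> v) / yy) *\<^sub>R y - ((s \<bullet> B v) / sig) *\<^sub>R B s" for v
    unfolding lbfgs_update_def yy_def sig_def by simp
  have symv: "B s \<bullet> v = s \<bullet> B v" for v using sym by blast
  have symv2: "s \<bullet> B v = v \<bullet> B s" for v using sym by (metis inner_commute)
  have linn: "linear (lbfgs_update B s y)"
  proof (rule linearI)
    fix a b show "lbfgs_update B s y (a + b) = lbfgs_update B s y a + lbfgs_update B s y b"
      unfolding Bn by (simp add: linear_add[OF lin] inner_add_right add_divide_distrib scaleR_add_left algebra_simps)
  next
    fix r a show "lbfgs_update B s y (r *\<^sub>R a) = r *\<^sub>R lbfgs_update B s y a"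
      unfolding Bn by (simp add: linear_scale[OF lin] scaleR_diff_right scaleR_add_right)
  qed
  have symn: "\<forall>u v. lbfgs_update B s y u \<bullet> v = u \<bullet> lbfgs_update B s y v"
  proof (intro allI)
    fix u v
    have e1: "B u \<bullet> v = u \<bullet> B v" using sym by blast
    have e2: "s \<bullet> B u = u \<bullet> B s" using symv2 by blast
    show "lbfgs_update B s y u \<bullet> v = u \<bullet> lbfgs_update B s y v"
      unfolding Bn by (simp add: inner_add_left inner_diff_left inner_add_right inner_diff_right e1 e2 symv
          inner_commute[of v y] inner_commute[of u y]; simp add: mult.commute)
  qed
  have bdn: "\<forall>v. norm (lbfgs_update B s y v) \<le> (2*La + L\<^sup>2/cs) * norm v"
  proof (intro allI)
    fix v
    have t1: "norm (((y \<bullet> v) / yy) *\<^sub>R y) \<le> L\<^sup>2/cs * norm v"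
    proof -
      have "norm (((y \<bullet> v) / yy) *\<^sub>R y) = \<bar>y \<bullet> v\<bar> * norm y / yy" using yyp by simp
      also have "\<dots> \<le> (norm y * norm v) * norm y / yy"
        using yyp by (intro divide_right_mono mult_right_mono) (auto simp: Cauchy_Schwarz_ineq2)
      also have "\<dots> = (norm y)\<^sup>2 / yy * norm v" by (simp add: power2_eq_square)
      also have "\<dots> \<le> L\<^sup>2/cs * norm v"
      proof (rule mult_right_mono)
        have "(norm y)\<^sup>2 \<le> (L * norm s)\<^sup>2" using yL by (simp add: power_mono)
        also have "\<dots> = L\<^sup>2/cs * (cs * (norm s)\<^sup>2)" using cs by (simp add: power_mult_distrib)
        also have "\<dots> \<le> L\<^sup>2/cs * yy" using ys cs unfolding yy_def by (intro mult_left_mono) auto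
        finally show "(norm y)\<^sup>2 / yy \<le> L\<^sup>2/cs" using yyp by (simp add: divide_le_eq mult.commute)
      qed simp
      finally show ?thesis .
    qed
    have t3: "norm (((s \<bullet> B v) / sig) *\<^sub>R B s) \<le> La * norm v"
    proof -
      have c1: "(s \<bullet> B v)\<^sup>2 \<le> sig * (v \<bullet> B v)" unfolding sig_def by (rule psd_cs[OF lin sym psd])
      have c2: "(norm (B s))\<^sup>2 \<le> La * sig" unfolding sig_def by (rule psd_norm_sq[OF lin sym psd bd La])
      have c3: "v \<bullet> B v \<le> La * (norm v)\<^sup>2"
      proof -
        have "v \<bullet> B v \<le> norm v * norm (B v)" by (rule Cauchy_Schwarz_ineq2[THEN abs_le_D1])
        also have "\<dots> \<le> norm v * (La * norm v)" using bd by (simp add: mult_left_mono)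
        finally show ?thesis by (simp add: power2_eq_square algebra_simps)
      qed
      have "(\<bar>s \<bullet> B v\<bar> * norm (B s))\<^sup>2 = (s \<bullet> B v)\<^sup>2 * (norm (B s))\<^sup>2" by (simp add: power_mult_distrib)
      also have "\<dots> \<le> (sig * (v \<bullet> B v)) * (La * sig)"
        using c1 c2 sigp psd by (intro mult_mono) (auto intro!: mult_nonneg_nonneg)
      also have "\<dots> \<le> (sig * (La * (norm v)\<^sup>2)) * (La * sig)"
        using c3 sigp La by (intro mult_right_mono mult_left_mono) auto
      also have "\<dots> = (sig * La * norm v)\<^sup>2" by (simp add: power2_eq_square algebra_simps)
      finally have sq: "(\<bar>s \<bullet> B v\<bar> * norm (B s))\<^sup>2 \<le> (sig * La * norm v)\<^sup>2" .
      have "0 \<le> sig * La * norm v" using sigp La by simp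
      with sq have "\<bar>s \<bullet> B v\<bar> * norm (B s) \<le> sig * La * norm v"
        by (rule power2_le_imp_le)
      then have "\<bar>s \<bullet> B v\<bar> * norm (B s) / sig \<le> La * norm v" using sigp by (simp add: divide_le_eq algebra_simps)
      moreover have "norm (((s \<bullet> B v) / sig) *\<^sub>R B s) = \<bar>(s \<bullet> B v) / sig\<bar> * norm (B s)"
        by (rule norm_scaleR)
      moreover have "\<bar>(s \<bullet> B v) / sig\<bar> = \<bar>s \<bullet> B v\<bar> / sig" using sigp by (simp add: abs_divide)
      ultimately show ?thesis by (metis times_divide_eq_left)
    qed
    have "norm (lbfgs_update B s y v) \<le> norm (B v) + norm (((y \<bullet> v) / yy) *\<^sub>R y) + norm (((s \<bullet> B v) / sig) *\<^sub>R B s)"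
      unfolding Bn using norm_triangle_ineq4[of "B v + ((y \<bullet> v) / yy) *\<^sub>R y" "((s \<bullet> B v) / sig) *\<^sub>R B s"]
        norm_triangle_ineq[of "B v" "((y \<bullet> v) / yy) *\<^sub>R y"] by linarith
    then show "norm (lbfgs_update B s y v) \<le> (2*La + L\<^sup>2/cs) * norm v"
      using t1 t3 bd[rule_format, of v] by (simp add: distrib_right)
  qed
  have posn: "\<forall>v. ((1/(2*(1+2*L/cs)\<^sup>2)) * min mu (cs/4)) * (norm v)\<^sup>2 \<le> v \<bullet> lbfgs_update B s y v"
  proof (intro allI)
    fix v
    define t where "t = (s \<bullet> B v) / sig"
    define u where "u = v - t *\<^sub>R s"
    have uBu: "u \<bullet> B u = v \<bullet> B v - (s \<bullet> B v)\<^sup>2 / sig"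
    proof -
      have "u \<bullet> B u = v \<bullet> B v - 2 * t * (s \<bullet> B v) + t\<^sup>2 * sig"
        unfolding u_def sig_def using symv2[of v]
        by (simp add: linear_diff[OF lin] linear_scale[OF lin] inner_diff_left inner_diff_right
            power2_eq_square algebra_simps)
      also have "\<dots> = v \<bullet> B v - (s \<bullet> B v)\<^sup>2 / sig" unfolding t_def using sigp
        by (simp add: field_simps power2_eq_square)
      finally show ?thesis .
    qed
    have vBn: "v \<bullet> lbfgs_update B s y v = u \<bullet> B u + (y \<bullet> v)\<^sup>2 / yy"
      unfolding Bn uBu using symv2[of v] by (simp add: inner_add_right inner_diff_right power2_eq_square inner_commute[of v y])
    have yv: "y \<bullet> v = y \<bullet> u + t * yy" unfolding u_def yy_def by (simp add: inner_diff_right)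
    have "((1/(2*(1+2*L/cs)\<^sup>2)) * min mu (cs/4)) * (norm v)\<^sup>2 \<le> mu * (norm u)\<^sup>2 + (y \<bullet> u + t*yy)\<^sup>2/yy"
    proof (rule real_core[OF mu cs L ns])
      show "cs * (norm s)\<^sup>2 \<le> yy" using ys unfolding yy_def by simp
      show "0 \<le> norm u" by simp
      show "0 \<le> norm v" by simp
      have "v = u + t *\<^sub>R s" unfolding u_def by simp
      then show "norm v \<le> norm u + \<bar>t\<bar> * norm s" by (metis norm_scaleR norm_triangle_ineq)
      have "\<bar>y \<bullet> u\<bar> \<le> norm y * norm u" by (rule Cauchy_Schwarz_ineq2)
      also have "\<dots> \<le> L * norm s * norm u" using yL by (simp add: mult_right_mono)
      finally show "\<bar>y \<bullet> u\<bar> \<le> L * norm s * norm u" .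
    qed
    also have "\<dots> \<le> u \<bullet> B u + (y \<bullet> v)\<^sup>2 / yy" using pos yv by simp
    finally show "((1/(2*(1+2*L/cs)\<^sup>2)) * min mu (cs/4)) * (norm v)\<^sup>2 \<le> v \<bullet> lbfgs_update B s y v"
      using vBn by simp
  qed
  have kp: "0 < (1/(2*(1+2*L/cs)\<^sup>2)) * min mu (cs/4)"
  proof -
    have "0 < 1 + 2*L/cs" using L cs by (simp add: add_pos_nonneg)
    then show ?thesis using mu cs by simp
  qed
  have Lp: "0 \<le> 2*La + L\<^sup>2/cs" using La cs by simp
  show ?thesis unfolding inv_op_def using linn symn bdn posn kp Lp by blast
qed
lemma inv_op_mono:
  assumes "inv_op B mu La" "0 < mu'" "mu' \<le> mu" "La \<le> La'"
  shows "inv_op B mu' La'"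
proof -
  have "\<forall>u. mu' * (norm u)\<^sup>2 \<le> u \<bullet> B u"
    using assms unfolding inv_op_def by (meson mult_right_mono order_trans zero_le_power2)
  moreover have "\<forall>u. norm (B u) \<le> La' * norm u"
    using assms unfolding inv_op_def by (meson mult_right_mono order_trans norm_ge_zero)
  ultimately show ?thesis using assms unfolding inv_op_def by auto
qed

lemma kappa_le: 
  assumes "0 < cs" "0 \<le> L" shows "0 < 1/(2*(1+2*L/cs)\<^sup>2)" "1/(2*(1+2*L/cs)\<^sup>2) \<le> (1::real)"
proof -
  have "1 \<le> 1+2*L/cs" using assms by simp
  then have "1 \<le> (1+2*L/cs)\<^sup>2" by (simp add: one_le_power)
  then have X: "1 \<le> 2*(1+2*L/cs)\<^sup>2" by linarith
  have gen: "1 \<le> X \<Longrightarrow> 0 < 1/X \<and> 1/X \<le> (1::real)" for X by simp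
  from gen[OF X] show "0 < 1/(2*(1+2*L/cs)\<^sup>2)" "1/(2*(1+2*L/cs)\<^sup>2) \<le> (1::real)" by auto
qed

lemma foldl_inv:
  fixes B :: "'a::real_inner \<Rightarrow> 'a"
  assumes "inv_op B mu La" "0 < cs" "0 \<le> L"
    "\<forall>j\<in>set js. cs * (norm (s j))\<^sup>2 < y j \<bullet> s j \<and> norm (y j) \<le> L * norm (s j)"
  shows "inv_op (foldl (\<lambda>B j. lbfgs_update B (s j) (y j)) B js)
           ((1/(2*(1+2*L/cs)\<^sup>2))^length js * min mu (cs/4)) (2^length js * (La + L\<^sup>2/cs))"
  using assms
proof (induction js arbitrary: B mu La)
  case Nil
  have "0 < min mu (cs/4)" using Nil unfolding inv_op_def by auto
  moreover have "0 \<le> L\<^sup>2/cs" using Nil by simp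
  ultimately show ?case using inv_op_mono[OF Nil(1), of "min mu (cs/4)" "La + L\<^sup>2/cs"] by simp
next
  case (Cons j js)
  let ?k = "1/(2*(1+2*L/cs)\<^sup>2)"
  have k: "0 < ?k" "?k \<le> 1" using kappa_le[OF Cons(3,4)] by auto
  have mu: "0 < mu" using Cons(2) unfolding inv_op_def by auto
  have u: "inv_op (lbfgs_update B (s j) (y j)) (?k * min mu (cs/4)) (2*La + L\<^sup>2/cs)"
    using update_inv[OF Cons(2,3,4)] Cons(5) by auto
  have IH: "inv_op (foldl (\<lambda>B j. lbfgs_update B (s j) (y j)) (lbfgs_update B (s j) (y j)) js)
           (?k^length js * min (?k * min mu (cs/4)) (cs/4)) (2^length js * ((2*La + L\<^sup>2/cs) + L\<^sup>2/cs))"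
    using Cons.IH[OF u Cons(3,4)] Cons(5) by auto
  have "?k * min mu (cs/4) \<le> cs/4" using k mu Cons(3)
    by (meson min.cobounded2 mult_le_cancel_right1 order_trans mult_left_le_one_le min.boundedI less_imp_le divide_pos_pos zero_less_numeral min_def)
  then have e1: "min (?k * min mu (cs/4)) (cs/4) = ?k * min mu (cs/4)" by simp
  have e2: "2^length js * ((2*La + L\<^sup>2/cs) + L\<^sup>2/cs) = 2^length (j#js) * (La + L\<^sup>2/cs)"
    by (simp add: algebra_simps)
  show ?case using IH unfolding e1 e2 by (simp add: mult.assoc)
qed
lemma blinfun_Cauchy_convergent:
  fixes X::"nat \<Rightarrow> 'a::real_normed_vector \<Rightarrow>\<^sub>L 'b::{real_normed_vector,complete_space}"
  assumes "Cauchy X" shows "convergent X"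
proof -
  {
    fix x::'a
    {
      fix x::'a
      assume "norm x \<le> 1"
      have "Cauchy (\<lambda>n. X n x)"
      proof (rule CauchyI)
        fix e::real
        assume "0 < e"
        from CauchyD[OF \<open>Cauchy X\<close> \<open>0 < e\<close>] obtain M
          where M: "\<And>m n. m \<ge> M \<Longrightarrow> n \<ge> M \<Longrightarrow> norm (X m - X n) < e"
          by auto
        show "\<exists>M. \<forall>m\<ge>M. \<forall>n\<ge>M. norm (X m x - X n x) < e"
        proof (safe intro!: exI[where x=M])
          fix m n
          assume le: "M \<le> m" "M \<le> n"
          have "norm (X m x - X n x) = norm ((X m - X n) x)"
            by (simp add: blinfun.bilinear_simps)
          also have "\<dots> \<le> norm (X m - X n) * norm x"
             by (rule norm_blinfun)
          also have "\<dots> \<le> norm (X m - X n) * 1"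
            using \<open>norm x \<le> 1\<close> norm_ge_zero by (rule mult_left_mono)
          also have "\<dots> = norm (X m - X n)" by simp
          also have "\<dots> < e" using le by fact
          finally show "norm (X m x - X n x) < e" .
        qed
      qed
      hence "convergent (\<lambda>n. X n x)"
        by (metis Cauchy_convergent_iff)
    } note convergent_norm1 = this
    define y where "y = x /\<^sub>R norm x"
    have y: "norm y \<le> 1" and xy: "x = norm x *\<^sub>R y"
      by (simp_all add: y_def inverse_eq_divide)
    have "convergent (\<lambda>n. norm x *\<^sub>R X n y)"
      by (intro bounded_bilinear.convergent[OF bounded_bilinear_scaleR] convergent_const
        convergent_norm1 y)
    also have "(\<lambda>n. norm x *\<^sub>R X n y) = (\<lambda>n. X n x)"
      by (subst xy) (simp add: blinfun.bilinear_simps)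
    finally have "convergent (\<lambda>n. X n x)" .
  }
  then obtain v where v: "\<And>x. (\<lambda>n. X n x) \<longlonglongrightarrow> v x"
    unfolding convergent_def
    by metis

  have "Cauchy (\<lambda>n. norm (X n))"
  proof (rule CauchyI)
    fix e::real
    assume "e > 0"
    from CauchyD[OF \<open>Cauchy X\<close> \<open>0 < e\<close>] obtain M
      where M: "\<And>m n. m \<ge> M \<Longrightarrow> n \<ge> M \<Longrightarrow> norm (X m - X n) < e"
      by auto
    show "\<exists>M. \<forall>m\<ge>M. \<forall>n\<ge>M. norm (norm (X m) - norm (X n)) < e"
    proof (safe intro!: exI[where x=M])
      fix m n assume mn: "m \<ge> M" "n \<ge> M"
      have "norm (norm (X m) - norm (X n)) \<le> norm (X m - X n)"
        by (metis norm_triangle_ineq3 real_norm_def)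
      also have "\<dots> < e" using mn by fact
      finally show "norm (norm (X m) - norm (X n)) < e" .
    qed
  qed
  then obtain K where K: "(\<lambda>n. norm (X n)) \<longlonglongrightarrow> K"
    unfolding Cauchy_convergent_iff convergent_def
    by metis

  have "bounded_linear v"
  proof
    fix x y and r::real
    from tendsto_add[OF v[of x] v [of y]] v[of "x + y", unfolded blinfun.bilinear_simps]
      tendsto_scaleR[OF tendsto_const[of r] v[of x]] v[of "r *\<^sub>R x", unfolded blinfun.bilinear_simps]
    show "v (x + y) = v x + v y" "v (r *\<^sub>R x) = r *\<^sub>R v x"
      by (metis (poly_guards_query) LIMSEQ_unique)+
    show "\<exists>K. \<forall>x. norm (v x) \<le> norm x * K"
    proof (safe intro!: exI[where x=K])
      fix x
      have "norm (v x) \<le> K * norm x"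
        by (rule tendsto_le[OF _ tendsto_mult[OF K tendsto_const] tendsto_norm[OF v]])
          (auto simp: norm_blinfun)
      thus "norm (v x) \<le> norm x * K"
        by (simp add: ac_simps)
    qed
  qed
  hence Bv: "\<And>x. (\<lambda>n. X n x) \<longlonglongrightarrow> Blinfun v x"
    by (auto simp: bounded_linear_Blinfun_apply v)

  have "X \<longlonglongrightarrow> Blinfun v"
  proof (rule LIMSEQ_I)
    fix r::real assume "r > 0"
    define r' where "r' = r / 2"
    have "0 < r'" "r' < r" using \<open>r > 0\<close> by (simp_all add: r'_def)
    from CauchyD[OF \<open>Cauchy X\<close> \<open>r' > 0\<close>]
    obtain M where M: "\<And>m n. m \<ge> M \<Longrightarrow> n \<ge> M \<Longrightarrow> norm (X m - X n) < r'"
      by metis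
    show "\<exists>no. \<forall>n\<ge>no. norm (X n - Blinfun v) < r"
    proof (safe intro!: exI[where x=M])
      fix n assume n: "M \<le> n"
      have "norm (X n - Blinfun v) \<le> r'"
      proof (rule norm_blinfun_bound)
        fix x
        have "eventually (\<lambda>m. m \<ge> M) sequentially"
          by (metis eventually_ge_at_top)
        hence ev_le: "eventually (\<lambda>m. norm (X n x - X m x) \<le> r' * norm x) sequentially"
        proof eventually_elim
          case (elim m)
          have "norm (X n x - X m x) = norm ((X n - X m) x)"
            by (simp add: blinfun.bilinear_simps)
          also have "\<dots> \<le> norm ((X n - X m)) * norm x"
            by (rule norm_blinfun)
          also have "\<dots> \<le> r' * norm x"
            using M[OF n elim] by (simp add: mult_right_mono)
          finally show ?case .
        qed
        have tendsto_v: "(\<lambda>m. norm (X n x - X m x)) \<longlonglongrightarrow> norm (X n x - Blinfun v x)"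
          by (auto intro!: tendsto_intros Bv)
        show "norm ((X n - Blinfun v) x) \<le> r' * norm x"
          by (auto intro!: tendsto_upperbound tendsto_v ev_le simp: blinfun.bilinear_simps)
      qed (simp add: \<open>0 < r'\<close> less_imp_le)
      thus "norm (X n - Blinfun v) < r"
        by (metis \<open>r' < r\<close> le_less_trans)
    qed
  qed
  thus "convergent X"
    by (rule convergentI)
qed

typedef (overloaded) ('a, 'b) bl = "UNIV :: ('a::real_normed_vector \<Rightarrow>\<^sub>L 'b::{real_normed_vector,complete_space}) set"
  morphisms bl_rep bl_abs by auto

setup_lifting type_definition_bl

instantiation bl :: (real_normed_vector, "{real_normed_vector,complete_space}") real_normed_vector
begin
lift_definition norm_bl :: "('a, 'b) bl \<Rightarrow> real" is norm .
lift_definition minus_bl :: "('a, 'b) bl \<Rightarrow> ('a, 'b) bl \<Rightarrow> ('a, 'b) bl" is "(-)" .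
lift_definition plus_bl :: "('a, 'b) bl \<Rightarrow> ('a, 'b) bl \<Rightarrow> ('a, 'b) bl" is "(+)" .
lift_definition uminus_bl :: "('a, 'b) bl \<Rightarrow> ('a, 'b) bl" is uminus .
lift_definition zero_bl :: "('a, 'b) bl" is 0 .
lift_definition scaleR_bl :: "real \<Rightarrow> ('a, 'b) bl \<Rightarrow> ('a, 'b) bl" is scaleR .
definition dist_bl :: "('a, 'b) bl \<Rightarrow> ('a, 'b) bl \<Rightarrow> real" where "dist_bl a b = norm (a - b)"
definition uniformity_bl :: "(('a, 'b) bl \<times> ('a, 'b) bl) filter"
  where "uniformity_bl = (INF e\<in>{0 <..}. principal {(x, y). dist x y < e})"
definition open_bl :: "('a, 'b) bl set \<Rightarrow> bool"
  where "open_bl S = (\<forall>x\<in>S. \<forall>\<^sub>F (x', y) in uniformity. x' = x \<longrightarrow> y \<in> S)"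
definition sgn_bl :: "('a, 'b) bl \<Rightarrow> ('a, 'b) bl" where "sgn_bl x = scaleR (inverse (norm x)) x"
instance
  apply standard
  unfolding dist_bl_def open_bl_def sgn_bl_def uniformity_bl_def
  apply (rule refl | (transfer, force simp: norm_triangle_ineq algebra_simps))+
  done
end

lemma bl_rep_dist: "dist (bl_rep a) (bl_rep b) = dist a b"
  unfolding dist_bl_def dist_norm by transfer simp

instance bl :: (real_normed_vector, "{real_normed_vector,complete_space}") complete_space
proof
  fix X :: "nat \<Rightarrow> ('a, 'b) bl"
  assume "Cauchy X"
  then have "Cauchy (\<lambda>n. bl_rep (X n))" unfolding Cauchy_def bl_rep_dist .
  then obtain l where l: "(\<lambda>n. bl_rep (X n)) \<longlonglongrightarrow> l"
    using blinfun_Cauchy_convergent convergent_def by blast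
  have "X \<longlonglongrightarrow> bl_abs l"
  proof -
    have "dist (X n) (bl_abs l) = dist (bl_rep (X n)) l" for n
      using bl_rep_dist[of "X n" "bl_abs l"] by (simp add: bl_abs_inverse)
    then show ?thesis using l unfolding tendsto_iff by simp
  qed
  then show "convergent X" by (rule convergentI)
qed

instance bl :: (real_normed_vector, "{real_normed_vector,complete_space}") banach ..

lemma bounded_linear_bl_abs: "bounded_linear (bl_abs :: ('a::real_normed_vector \<Rightarrow>\<^sub>L 'b::{real_normed_vector,complete_space}) \<Rightarrow> _)"
proof
  fix a b :: "'a \<Rightarrow>\<^sub>L 'b" and r :: real
  show "bl_abs (a + b) = bl_abs a + bl_abs b" by (simp add: plus_bl.abs_eq)
  show "bl_abs (r *\<^sub>R a) = r *\<^sub>R bl_abs a" by (simp add: scaleR_bl.abs_eq)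
  show "\<exists>K. \<forall>x. norm (bl_abs x :: ('a,'b) bl) \<le> norm x * K"
    by (rule exI[of _ 1]) (simp add: norm_bl.abs_eq)
qed

lemma bounded_linear_bl_rep: "bounded_linear (bl_rep :: ('a::real_normed_vector, 'b::{real_normed_vector,complete_space}) bl \<Rightarrow> _)"
proof
  fix a b :: "('a, 'b) bl" and r :: real
  show "bl_rep (a + b) = bl_rep a + bl_rep b" by transfer simp
  show "bl_rep (r *\<^sub>R a) = r *\<^sub>R bl_rep a" by transfer simp
  show "\<exists>K. \<forall>x. norm (bl_rep x) \<le> norm x * K"
    by (rule exI[of _ 1]) (simp add: norm_bl.rep_eq)
qed

lemma blinfun_integrable_continuous:
  fixes F :: "real \<Rightarrow> ('a::real_normed_vector \<Rightarrow>\<^sub>L 'b::{real_normed_vector,complete_space})"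
  assumes "continuous_on {a..b} F"
  shows "F integrable_on {a..b}"
proof -
  have c: "continuous_on {a..b} (bl_abs \<circ> F)"
    by (rule continuous_on_compose[OF assms]) (rule linear_continuous_on[OF bounded_linear_bl_abs])
  have "(bl_abs \<circ> F) integrable_on {a..b}" by (rule integrable_continuous_interval[OF c])
  then obtain I where "((bl_abs \<circ> F) has_integral I) {a..b}" by blast
  from has_integral_linear[OF this bounded_linear_bl_rep]
  have "((bl_rep \<circ> (bl_abs \<circ> F)) has_integral bl_rep I) {a..b}" .
  moreover have "bl_rep \<circ> (bl_abs \<circ> F) = F" by (rule ext) (simp add: bl_abs_inverse)
  ultimately show ?thesis unfolding integrable_on_def by metis
qed
lemma hess_z:
  fixes g :: "'a::{real_inner,complete_space} \<Rightarrow> 'a" and H :: "'a \<Rightarrow> ('a \<Rightarrow>\<^sub>L 'a)"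
  assumes der: "\<forall>z. (g has_derivative blinfun_apply (H z)) (at z)" and cH: "continuous_on UNIV H"
  shows "blinfun_apply (integral {0..1} (\<lambda>t. H (a + t *\<^sub>R s))) s = g (a + s) - g a"
proof -
  define F where "F = (\<lambda>t::real. H (a + t *\<^sub>R s))"
  have cF: "continuous_on {0..1} F" unfolding F_def
    by (rule continuous_on_compose2[OF cH]) (auto intro!: continuous_intros)
  have "F integrable_on {0..1}" by (rule blinfun_integrable_continuous[OF cF])
  then have hI: "(F has_integral integral {0..1} F) {0..1}" by (rule integrable_integral)
  define I where "I = integral {0..1} F"
  have key: "w \<bullet> (blinfun_apply I s) = w \<bullet> (g (a + s) - g a)" for w
  proof -
    have bl: "bounded_linear (\<lambda>A::'a \<Rightarrow>\<^sub>L 'a. w \<bullet> blinfun_apply A s)"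
      by (intro bounded_linear_compose[OF bounded_linear_inner_right] bounded_linear_apply_blinfun)
    have i1: "((\<lambda>t. w \<bullet> blinfun_apply (F t) s) has_integral (w \<bullet> blinfun_apply I s)) {0..1}"
      using has_integral_linear[OF hI[folded I_def] bl] by (simp add: o_def)
    have d: "((\<lambda>t. w \<bullet> g (a + t *\<^sub>R s)) has_vector_derivative (w \<bullet> blinfun_apply (F t) s)) (at t within {0..1})"
      for t
    proof -
      have d1: "((\<lambda>t. a + t *\<^sub>R s) has_derivative (\<lambda>h. h *\<^sub>R s)) (at t within {0..1})"
        by (auto intro!: derivative_eq_intros)
      have d2: "(g has_derivative blinfun_apply (H (a + t *\<^sub>R s))) (at (a + t *\<^sub>R s))" using der by blast
      have d3: "((\<lambda>t. g (a + t *\<^sub>R s)) has_derivative (\<lambda>h. blinfun_apply (H (a + t *\<^sub>R s)) (h *\<^sub>R s))) (at t within {0..1})"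
        by (rule has_derivative_compose[OF d1 d2])
      have d4: "((\<lambda>t. w \<bullet> g (a + t *\<^sub>R s)) has_derivative (\<lambda>h. w \<bullet> blinfun_apply (H (a + t *\<^sub>R s)) (h *\<^sub>R s))) (at t within {0..1})"
        by (rule has_derivative_inner_right[OF d3])
      have e: "(\<lambda>h. w \<bullet> blinfun_apply (H (a + t *\<^sub>R s)) (h *\<^sub>R s)) = (\<lambda>h. h *\<^sub>R (w \<bullet> blinfun_apply (F t) s))"
        unfolding F_def by (auto simp: blinfun.scaleR_right)
      show ?thesis unfolding has_vector_derivative_def using d4 e by simp
    qed
    have i2: "((\<lambda>t. w \<bullet> blinfun_apply (F t) s) has_integral (w \<bullet> g (a + 1 *\<^sub>R s) - w \<bullet> g (a + 0 *\<^sub>R s))) {0..1}"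
      by (rule fundamental_theorem_of_calculus[where f="\<lambda>t. w \<bullet> g (a + t *\<^sub>R s)"]) (use d in auto)
    have "w \<bullet> blinfun_apply I s = w \<bullet> g (a + 1 *\<^sub>R s) - w \<bullet> g (a + 0 *\<^sub>R s)"
      by (rule has_integral_unique[OF i1 i2])
    then show ?thesis by (simp add: inner_diff_right)
  qed
  have "(blinfun_apply I s - (g (a + s) - g a)) \<bullet> (blinfun_apply I s - (g (a + s) - g a)) = 0"
    using key[of "blinfun_apply I s - (g (a + s) - g a)"] by (simp add: inner_diff_right)
  then show ?thesis unfolding I_def F_def by simp
qed
lemma omega_l_le: "omega_l c0 c1 c2 gn \<le> c0" unfolding omega_l_def by simp

lemma omega_l_nonneg: "0 \<le> c0 \<Longrightarrow> 0 \<le> c1 \<Longrightarrow> 0 \<le> omega_l c0 c1 c2 gn"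
  unfolding omega_l_def by simp

lemma projP_ge:
  assumes "ereal c0 \<le> C0"
  shows "omega_l c0 c1 c2 gn \<le> projP c0 C0 c1 c2 gn t"
proof -
  define wl where "wl = omega_l c0 c1 c2 gn"
  define wu where "wu = omega_u C0 c1 c2 gn"
  have "C0 \<le> wu" unfolding wu_def omega_u_def by simp
  then have wu: "ereal wl \<le> wu" using assms omega_l_le[of c0 c1 c2 gn] unfolding wl_def
    by (meson ereal_less_eq(3) order_trans)
  show ?thesis
  proof (cases wu)
    case (real w)
    then have "wl \<le> w" using wu by simp
    then show ?thesis unfolding projP_def wl_def[symmetric] wu_def[symmetric] using real
      by (simp add: min_def max_def del: ereal_max ereal_min)
  next
    case PInf
    then show ?thesis unfolding projP_def wl_def[symmetric] wu_def[symmetric] by (simp del: ereal_max ereal_min)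
  next
    case MInf
    then show ?thesis using wu by simp
  qed
qed

lemma projP_le_fin:
  assumes "C0 = ereal C"
  shows "projP c0 C0 c1 c2 gn t \<le> max C (inverse (c1 * gn powr c2))"
  unfolding projP_def omega_u_def assms by (simp add: min_def max_def)

lemma projP_inf:
  assumes "C0 = \<infinity>"
  shows "projP c0 C0 c1 c2 gn t = max t (omega_l c0 c1 c2 gn)"
  unfolding projP_def omega_u_def assms by (simp del: ereal_max ereal_min)

lemma B0_basic:
  fixes S :: "nat \<Rightarrow> 'a::real_inner \<Rightarrow>\<^sub>L 'a"
  assumes sp: "sym_psd (S k)" and nS: "norm (S k) \<le> Ms" and t0: "0 \<le> \<tau> k"
  shows "linear (slbfgs_B0 \<tau> S k)" "\<forall>u v. slbfgs_B0 \<tau> S k u \<bullet> v = u \<bullet> slbfgs_B0 \<tau> S k v"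
    "\<forall>u. \<tau> k * (norm u)\<^sup>2 \<le> u \<bullet> slbfgs_B0 \<tau> S k u"
    "\<forall>u. norm (slbfgs_B0 \<tau> S k u) \<le> (\<tau> k + Ms) * norm u"
    "\<forall>u. 0 \<le> u \<bullet> slbfgs_B0 \<tau> S k u"
proof -
  have B: "slbfgs_B0 \<tau> S k u = \<tau> k *\<^sub>R u + blinfun_apply (S k) u" for u unfolding slbfgs_B0_def by simp
  show "linear (slbfgs_B0 \<tau> S k)"
    by (rule linearI) (simp_all add: B blinfun.add_right blinfun.scaleR_right algebra_simps)
  show "\<forall>u v. slbfgs_B0 \<tau> S k u \<bullet> v = u \<bullet> slbfgs_B0 \<tau> S k v"
    using sp unfolding sym_psd_def by (simp add: B inner_add_left inner_add_right inner_commute)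
  have q: "\<tau> k * (norm u)\<^sup>2 \<le> u \<bullet> slbfgs_B0 \<tau> S k u" for u
  proof -
    have "u \<bullet> slbfgs_B0 \<tau> S k u = \<tau> k * (norm u)\<^sup>2 + u \<bullet> blinfun_apply (S k) u"
      by (simp add: B inner_add_right power2_norm_eq_inner)
    moreover have "0 \<le> u \<bullet> blinfun_apply (S k) u" using sp unfolding sym_psd_def
      by (metis inner_commute)
    ultimately show ?thesis by simp
  qed
  then show "\<forall>u. \<tau> k * (norm u)\<^sup>2 \<le> u \<bullet> slbfgs_B0 \<tau> S k u" by blast
  show "\<forall>u. 0 \<le> u \<bullet> slbfgs_B0 \<tau> S k u" using q t0 by (meson order_trans mult_nonneg_nonneg zero_le_power2)
  show "\<forall>u. norm (slbfgs_B0 \<tau> S k u) \<le> (\<tau> k + Ms) * norm u"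
  proof
    fix u
    have "norm (slbfgs_B0 \<tau> S k u) \<le> norm (\<tau> k *\<^sub>R u) + norm (blinfun_apply (S k) u)"
      unfolding B by (rule norm_triangle_ineq)
    also have "norm (blinfun_apply (S k) u) \<le> Ms * norm u"
      using norm_blinfun[of "S k" u] nS by (meson mult_right_mono norm_ge_zero order_trans)
    finally show "norm (slbfgs_B0 \<tau> S k u) \<le> (\<tau> k + Ms) * norm u"
      using t0 by (simp add: distrib_right)
  qed
qed

lemma mX_one:
  fixes G c2 :: real assumes "0 < G"
  shows "min 1 (G powr c2) * max 1 (G powr (- c2)) = 1"
proof (cases "G powr c2 \<le> 1")
  case True
  have p: "0 < G powr c2" using assms by simp
  then have "1 \<le> G powr (- c2)" using True by (simp add: powr_minus field_simps)
  then show ?thesis using True p by (simp add: powr_minus)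
next
  case False
  then have "G powr (- c2) \<le> 1" using assms by (simp add: powr_minus field_simps)
  then show ?thesis using False by simp
qed

lemma final_ineq:
  fixes g d :: "'a::real_inner" and B :: "'a \<Rightarrow> 'a"
  assumes G: "0 < norm g" and inv: "inv_op B mu La" and Bd: "B d = - g"
    and clo: "0 < clo" and chi: "0 < chi"
    and mu: "clo * min 1 (norm g powr c2) \<le> mu" and La: "La \<le> chi * max 1 (norm g powr (- c2))"
  shows "1/chi * min 1 (norm g powr c2) \<le> norm d / norm g"
    "norm d / norm g \<le> max (1/clo) (chi/clo) * max 1 (norm g powr (- c2))"
    "inverse (max (1/clo) (chi/clo)) * norm g * min 1 (norm g powr (2 * c2)) \<le> \<bar>g \<bullet> d\<bar> / norm d"
proof -
  define m where "m = min 1 (norm g powr c2)"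
  define X where "X = max 1 (norm g powr (- c2))"
  have mX: "m * X = 1" unfolding m_def X_def by (rule mX_one[OF G])
  have m0: "0 < m" unfolding m_def using G by simp
  have m1: "m \<le> 1" unfolding m_def by simp
  have X1: "1 \<le> X" unfolding X_def by simp
  from inv have lin: "linear B" and pos: "\<forall>u. mu * (norm u)\<^sup>2 \<le> u \<bullet> B u"
    and bd: "\<forall>u. norm (B u) \<le> La * norm u" and mup: "0 < mu" and La0: "0 \<le> La"
    unfolding inv_op_def by auto
  have d0: "d \<noteq> 0"
  proof
    assume "d = 0" then have "B d = 0" using linear_0[OF lin] by simp
    with Bd G show False by simp
  qed
  then have nd: "0 < norm d" by simp
  have "g = - B d" using Bd by simp
  then have gd: "g \<bullet> d = - (d \<bullet> B d)" by (simp add: inner_commute)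
  have q1: "mu * (norm d)\<^sup>2 \<le> d \<bullet> B d" using pos by blast
  have q2: "d \<bullet> B d \<le> norm d * norm g"
  proof -
    have "d \<bullet> B d \<le> norm d * norm (B d)" by (rule Cauchy_Schwarz_ineq2[THEN abs_le_D1])
    then show ?thesis using Bd by simp
  qed
  have dg1: "mu * norm d \<le> norm g"
  proof -
    have "mu * norm d * norm d \<le> norm g * norm d" using q1 q2 by (simp add: power2_eq_square algebra_simps)
    then show ?thesis using nd by simp
  qed
  have "norm g = norm (B d)" using Bd by simp
  then have dg2: "norm g \<le> La * norm d" using bd by simp
  have La_pos: "0 < La"
  proof (rule ccontr)
    assume "\<not> 0 < La" then have "La * norm d \<le> 0" using nd by (simp add: mult_nonpos_nonneg)
    then show False using dg2 G by linarith
  qed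
  have "m / chi \<le> 1 / La"
  proof -
    have "La * m \<le> chi * X * m" using La m0 unfolding X_def m_def by (simp add: mult_right_mono)
    also have "\<dots> = chi" using mX by (simp add: algebra_simps)
    finally have "La * m \<le> chi" .
    then show ?thesis using La_pos chi by (simp add: field_simps)
  qed
  also have "1 / La \<le> norm d / norm g" using dg2 La_pos G by (simp add: field_simps)
  finally show "1/chi * min 1 (norm g powr c2) \<le> norm d / norm g" unfolding m_def by simp
  have "norm d / norm g \<le> 1 / mu" using dg1 mup G by (simp add: field_simps)
  also have "1 / mu \<le> X / clo"
  proof -
    have "clo * m \<le> mu" using mu unfolding m_def by simp
    then have "clo * m * X \<le> mu * X" using X1 by (intro mult_right_mono) auto
    moreover have "clo * m * X = clo" using mX by (simp add: mult.assoc)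
    ultimately have "clo \<le> mu * X" by simp
    then show ?thesis using mup clo by (simp add: field_simps)
  qed
  also have "X / clo \<le> max (1/clo) (chi/clo) * X"
  proof -
    have "(1/clo) * X \<le> max (1/clo) (chi/clo) * X" using X1 by (intro mult_right_mono) auto
    then show ?thesis by simp
  qed
  finally show "norm d / norm g \<le> max (1/clo) (chi/clo) * max 1 (norm g powr (- c2))" unfolding X_def .
  have m2: "min 1 (norm g powr (2 * c2)) = m * m"
  proof -
    have "norm g powr (2 * c2) = (norm g powr c2) * (norm g powr c2)"
      by (simp add: powr_add[symmetric])
    moreover have "min 1 (p * p) = min 1 p * min 1 p" if "0 \<le> p" for p :: real
    proof (cases "p \<le> 1")
      case True
      then have "p * p \<le> 1" using that by (simp add: mult_le_one)
      then show ?thesis using True by simp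
    next
      case False
      then have "1 < p * p" using less_1_mult[of p p] by simp
      then show ?thesis using False by simp
    qed
    ultimately show ?thesis unfolding m_def by simp
  qed
  have "0 \<le> mu * (norm d)\<^sup>2" using mup by simp
  then have "0 \<le> d \<bullet> B d" using q1 by linarith
  then have "\<bar>g \<bullet> d\<bar> = d \<bullet> B d" using gd by simp
  then have "\<bar>g \<bullet> d\<bar> / norm d = (d \<bullet> B d) / norm d" by simp
  also have "\<dots> \<ge> mu * norm d" using q1 nd by (simp add: field_simps power2_eq_square)
  finally have h3: "mu * norm d \<le> \<bar>g \<bullet> d\<bar> / norm d" .
  have "mu * norm d \<ge> mu * (norm g / La)" using dg2 La_pos mup by (simp add: field_simps)
  moreover have "mu * (norm g / La) \<ge> (clo * m) * (norm g * m / chi)"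
  proof (rule mult_mono)
    show "clo * m \<le> mu" using mu unfolding m_def by simp
    have "La * m \<le> chi * X * m" using La m0 unfolding X_def m_def by (intro mult_right_mono) auto
    also have "chi * X * m = chi" using mX by (simp add: algebra_simps)
    finally have "La * m \<le> chi" .
    then show "norm g * m / chi \<le> norm g / La" using La_pos chi G m0
      by (simp add: field_simps mult_left_mono)
  qed (use mup m0 G chi in auto)
  ultimately have "(clo * m) * (norm g * m / chi) \<le> \<bar>g \<bullet> d\<bar> / norm d" using h3 by linarith
  moreover have "inverse (max (1/clo) (chi/clo)) * norm g * (m * m) \<le> (clo * m) * (norm g * m / chi)"
  proof -
    have "inverse (max (1/clo) (chi/clo)) \<le> clo / chi"
    proof -
      have "inverse (max (1/clo) (chi/clo)) \<le> inverse (chi/clo)"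
        by (rule le_imp_inverse_le) (use clo chi in auto)
      then show ?thesis by simp
    qed
    then have "inverse (max (1/clo) (chi/clo)) * (norm g * (m * m)) \<le> clo / chi * (norm g * (m * m))"
      using G m0 by (intro mult_right_mono) auto
    then show ?thesis by (simp add: field_simps)
  qed
  ultimately show "inverse (max (1/clo) (chi/clo)) * norm g * min 1 (norm g powr (2 * c2)) \<le> \<bar>g \<bullet> d\<bar> / norm d"
    unfolding m2 by linarith
qed


lemma min_prod_le:
  fixes c0 c1 p :: real assumes "0 \<le> c0" "0 \<le> c1" "0 \<le> p"
  shows "min c0 c1 * min 1 p \<le> min c0 (c1 * p)"
proof (cases "p \<le> 1")
  case True
  have "min c0 c1 * p \<le> c0 * p" using assms by (intro mult_right_mono) auto
  also have "\<dots> \<le> c0" using True assms by (simp add: mult_left_le)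
  finally have 1: "min c0 c1 * p \<le> c0" .
  have "min c0 c1 * p \<le> c1 * p" using assms by (intro mult_right_mono) auto
  with 1 True show ?thesis by simp
next
  case False
  have "c1 \<le> c1 * p" using False assms by (simp add: mult_le_cancel_left1)
  then show ?thesis using False by simp
qed

theorem corollary4p7:
  fixes J :: "'a::{real_inner, complete_space} \<Rightarrow> real"
    and gJ :: "'a \<Rightarrow> 'a"
    and x d :: "nat \<Rightarrow> 'a"
    and \<alpha> \<tau> :: "nat \<Rightarrow> real"
    and S :: "nat \<Rightarrow> 'a \<Rightarrow>\<^sub>L 'a"
    and K :: enat
    and eps c0 cs c1 c2 L :: real
    and C0 :: ereal
    and ell :: nat
  assumes params: "0 \<le> eps" "0 \<le> c0" "ereal c0 \<le> C0" "0 < cs" "0 < c1" "0 < c2"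
    and tau0: "0 < \<tau> 0"
    and S_sym_psd: "\<And>k. enat k \<le> K \<Longrightarrow> sym_psd (S k)"
    and dir: "\<And>k. enat k \<le> K \<Longrightarrow> slbfgs_B cs ell gJ x \<tau> S k (d k) = - gJ (x k)"
    and update: "\<And>k. enat k \<le> K \<Longrightarrow> x (Suc k) = x k + \<alpha> k *\<^sub>R d k"
    and not_stopped: "\<And>k. enat k < K \<Longrightarrow> eps < norm (gJ (x (Suc k)))"
    and stopped: "\<And>k. enat k = K \<Longrightarrow> norm (gJ (x (Suc k))) \<le> eps"
    and tau_choice: "\<And>k. enat k < K \<Longrightarrow>
          tau_admissible c0 C0 c1 c2 (norm (gJ (x (Suc k)))) (step_s x k)
            (step_y gJ x k - blinfun_apply (S (Suc k)) (step_s x k)) (\<tau> (Suc k))"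
    \<comment> \<open>Assumption 1\<close>
    and grad: "\<And>z. GDERIV J z :> gJ z"
    and grad_cont: "continuous_on UNIV gJ"
    and bdd: "bdd_below (range J)"
    \<comment> \<open>Assumption 2\<close>
    and lip: "0 < L" "\<And>u v. J u \<le> J (x 0) \<Longrightarrow> J v \<le> J (x 0) \<Longrightarrow>
                 norm (gJ u - gJ v) \<le> L * norm (u - v)"
    \<comment> \<open>Assumption 3\<close>
    and S_bdd: "\<exists>M. \<forall>k. enat k \<le> K \<longrightarrow> norm (S k) \<le> M"
    \<comment> \<open>Assumption 4\<close>
    and linesearch:
      "(\<exists>\<beta> \<sigma>. 0 < \<beta> \<and> \<beta> < 1 \<and> 0 < \<sigma> \<and> \<sigma> < 1 \<and>
          (\<forall>k. enat k \<le> K \<longrightarrow>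
             (\<exists>i::nat. \<alpha> k = \<beta> ^ i \<and> armijo J gJ \<sigma> (x k) (d k) (\<beta> ^ i) \<and>
                (\<forall>i'<i. \<not> armijo J gJ \<sigma> (x k) (d k) (\<beta> ^ i')))) \<and>
          (\<exists>\<delta>>0. uniformly_continuous_on {z. \<exists>w. J w \<le> J (x 0) \<and> norm (z - w) < \<delta>} J \<or>
                  uniformly_continuous_on {z. \<exists>w. J w \<le> J (x 0) \<and> norm (z - w) < \<delta>} gJ))
       \<or> (\<exists>\<sigma> \<eta>. 0 < \<sigma> \<and> \<sigma> < \<eta> \<and> \<eta> < 1 \<and>
          (\<forall>k. enat k \<le> K \<longrightarrow> 0 < \<alpha> k \<and> armijo J gJ \<sigma> (x k) (d k) (\<alpha> k) \<and>
             \<eta> * (gJ (x k) \<bullet> d k) \<le> gJ (x k + \<alpha> k *\<^sub>R d k) \<bullet> d k))"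
    \<comment> \<open>Assumption 5\<close>
    and c0_zero: "c0 = 0 \<Longrightarrow> \<exists>M. \<forall>k. enat k \<le> K \<longrightarrow>
          surj (slbfgs_B0 \<tau> S k) \<and> (\<forall>v. norm v \<le> M * norm (slbfgs_B0 \<tau> S k v))"
    \<comment> \<open>Assumption 6\<close>
    and C0_inf: "C0 = \<infinity> \<Longrightarrow>
          (\<forall>k. enat k < K \<longrightarrow>
              \<tau> (Suc k) \<le> tau_g c0 C0 c1 c2 (norm (gJ (x (Suc k)))) (step_s x k)
                 (step_y gJ x k - blinfun_apply (S (Suc k)) (step_s x k)))
        \<or> (\<exists>H :: 'a \<Rightarrow> ('a \<Rightarrow>\<^sub>L 'a).
              (\<forall>z. (gJ has_derivative blinfun_apply (H z)) (at z)) \<and> continuous_on UNIV H \<and>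
              (\<forall>k. enat k < K \<longrightarrow>
                 sym_psd (integral {0..1} (\<lambda>t. H (x k + t *\<^sub>R step_s x k)) - S (Suc k))) \<and>
              (\<exists>M. \<forall>k. enat k < K \<longrightarrow>
                 norm (integral {0..1} (\<lambda>t. H (x k + t *\<^sub>R step_s x k)) - S (Suc k)) \<le> M))"
  shows "\<exists>c C. 0 < c \<and> 0 < C \<and> (\<forall>k. enat k \<le> K \<longrightarrow>
           c * min 1 (norm (gJ (x k)) powr c2) \<le> norm (d k) / norm (gJ (x k)) \<and>
           norm (d k) / norm (gJ (x k)) \<le> C * max 1 (norm (gJ (x k)) powr (- c2)) \<and>
           inverse C * norm (gJ (x k)) * min 1 (norm (gJ (x k)) powr (2 * c2))
             \<le> \<bar>gJ (x k) \<bullet> d k\<bar> / norm (d k))"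
  proof -
  have eps0: "0 \<le> eps" and c0: "0 \<le> c0" and cC: "ereal c0 \<le> C0" and cs: "0 < cs"
    and c1: "0 < c1" and c2: "0 < c2" using params by auto
  have Lp: "0 < L" using lip(1) .
  obtain M0 where M0: "\<forall>k. enat k \<le> K \<longrightarrow> norm (S k) \<le> M0" using S_bdd by blast
  define Ms where "Ms = max M0 1"
  have Ms: "0 < Ms" unfolding Ms_def by simp
  have SMs: "norm (S k) \<le> Ms" if "enat k \<le> K" for k
    using M0 that unfolding Ms_def by (meson max.coboundedI1)
  define gn where "gn k = norm (gJ (x k))" for k
  define mm where "mm k = min 1 (gn k powr c2)" for k
  define XX where "XX k = max 1 (gn k powr (- c2))" for k
  define kap where "kap = 1/(2*(1+2*L/cs)\<^sup>2)"
  have kap: "0 < kap" "kap \<le> 1" unfolding kap_def using kappa_le[OF cs] Lp by auto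
  have XX1: "1 \<le> XX k" for k unfolding XX_def by simp
  have mm1: "mm k \<le> 1" for k unfolding mm_def by simp
  have mm0: "0 \<le> mm k" for k unfolding mm_def by simp
  have gpos: "0 < gn (Suc j)" if "enat j < K" for j
    using not_stopped[OF that] eps0 unfolding gn_def by linarith
  have ltK: "enat j < K" if "enat (Suc j) \<le> K" for j using that by (simp add: Suc_ile_eq)
  have leK: "enat (Suc j) \<le> K" if "enat j < K" for j using that by (simp add: Suc_ile_eq)
  obtain \<sigma> where sig: "0 < \<sigma>"
    and ARM: "\<And>k. enat k \<le> K \<Longrightarrow> 0 < \<alpha> k \<and> armijo J gJ \<sigma> (x k) (d k) (\<alpha> k)"
  proof -
    from linesearch show ?thesis
    proof (rule disjE)
      assume LS1: "\<exists>\<beta> \<sigma>. 0 < \<beta> \<and> \<beta> < 1 \<and> 0 < \<sigma> \<and> \<sigma> < 1 \<and>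
          (\<forall>k. enat k \<le> K \<longrightarrow>
             (\<exists>i::nat. \<alpha> k = \<beta> ^ i \<and> armijo J gJ \<sigma> (x k) (d k) (\<beta> ^ i) \<and>
                (\<forall>i'<i. \<not> armijo J gJ \<sigma> (x k) (d k) (\<beta> ^ i')))) \<and>
          (\<exists>\<delta>>0. uniformly_continuous_on {z. \<exists>w. J w \<le> J (x 0) \<and> norm (z - w) < \<delta>} J \<or>
                  uniformly_continuous_on {z. \<exists>w. J w \<le> J (x 0) \<and> norm (z - w) < \<delta>} gJ)"
      from LS1 obtain \<beta> \<sigma> where b: "0 < \<beta>" and s: "0 < \<sigma>" and A: "\<forall>k. enat k \<le> K \<longrightarrow>
             (\<exists>i::nat. \<alpha> k = \<beta> ^ i \<and> armijo J gJ \<sigma> (x k) (d k) (\<beta> ^ i) \<and>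
                (\<forall>i'<i. \<not> armijo J gJ \<sigma> (x k) (d k) (\<beta> ^ i')))"
        by (elim exE conjE) (rule that, assumption+)
      have "0 < \<alpha> k \<and> armijo J gJ \<sigma> (x k) (d k) (\<alpha> k)" if kK': "enat k \<le> K" for k
      proof -
        obtain i where "\<alpha> k = \<beta> ^ i" "armijo J gJ \<sigma> (x k) (d k) (\<beta> ^ i)" using A kK' by blast
        then show ?thesis using b by simp
      qed
      then show ?thesis using that[OF s] by blast
    next
      assume LS2: "\<exists>\<sigma> \<eta>. 0 < \<sigma> \<and> \<sigma> < \<eta> \<and> \<eta> < 1 \<and>
          (\<forall>k. enat k \<le> K \<longrightarrow> 0 < \<alpha> k \<and> armijo J gJ \<sigma> (x k) (d k) (\<alpha> k) \<and>
             \<eta> * (gJ (x k) \<bullet> d k) \<le> gJ (x k + \<alpha> k *\<^sub>R d k) \<bullet> d k)"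
      from LS2 obtain \<sigma> \<eta> where s: "0 < \<sigma>" and A: "\<forall>k. enat k \<le> K \<longrightarrow> 0 < \<alpha> k \<and> armijo J gJ \<sigma> (x k) (d k) (\<alpha> k) \<and>
             \<eta> * (gJ (x k) \<bullet> d k) \<le> gJ (x k + \<alpha> k *\<^sub>R d k) \<bullet> d k"
        by (elim exE conjE) (rule that, assumption+)
      have "0 < \<alpha> k \<and> armijo J gJ \<sigma> (x k) (d k) (\<alpha> k)" if "enat k \<le> K" for k
        using A that by blast
      then show ?thesis using that[OF s] by blast
    qed
  qed
  have lipx: "norm (step_y gJ x j) \<le> L * norm (step_s x j)"
    if "J (x j) \<le> J (x 0)" "J (x (Suc j)) \<le> J (x 0)" for j
    unfolding step_y_def step_s_def using lip(2)[OF that(2,1)] .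
  obtain T where T: "0 < T" "\<tau> 0 \<le> T"
    and TAU_HI: "\<And>j. enat j < K \<Longrightarrow> J (x j) \<le> J (x 0) \<Longrightarrow> J (x (Suc j)) \<le> J (x 0) \<Longrightarrow>
                   \<tau> (Suc j) \<le> T * XX (Suc j)"
  proof -
    define zz where "zz j = step_y gJ x j - blinfun_apply (S (Suc j)) (step_s x j)" for j
    have tup: "\<tau> (Suc j) \<le> (if zz j \<bullet> step_s x j > 0 then tau_z c0 C0 c1 c2 (gn (Suc j)) (step_s x j) (zz j)
                  else tau_g c0 C0 c1 c2 (gn (Suc j)) (step_s x j) (zz j))" if "enat j < K" for j
      using tau_choice[OF that] unfolding tau_admissible_def zz_def gn_def by blast
    show ?thesis
    proof (cases C0)
      case (real C)
      have C0': "c0 \<le> C" using cC real by simp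
      define T where "T = C + 1/c1 + \<tau> 0"
      have "0 < 1/c1" using c1 by simp
      then have T0: "0 < T" "\<tau> 0 \<le> T" using C0' c0 tau0 unfolding T_def by linarith+
      have "\<tau> (Suc j) \<le> T * XX (Suc j)" if jK: "enat j < K" for j
      proof -
        have G: "0 < gn (Suc j)" using gpos[OF jK] .
        have "\<tau> (Suc j) \<le> max C (inverse (c1 * gn (Suc j) powr c2))"
          using tup[OF jK] projP_le_fin[OF real] unfolding tau_z_def tau_g_def
          by (smt (verit))
        also have "\<dots> \<le> T * XX (Suc j)"
        proof -
          have "inverse (c1 * gn (Suc j) powr c2) = (1/c1) * gn (Suc j) powr (- c2)"
            using G c1 by (simp add: powr_minus divide_inverse mult.commute)
          also have "\<dots> \<le> (1/c1) * XX (Suc j)" unfolding XX_def using c1 by (intro mult_left_mono) auto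
          finally have i1: "inverse (c1 * gn (Suc j) powr c2) \<le> (1/c1) * XX (Suc j)" .
          have i2: "C * 1 \<le> C * XX (Suc j)" using C0' c0 XX1 by (intro mult_left_mono) auto
          have X0: "0 \<le> XX (Suc j)" using XX1[of "Suc j"] by linarith
          have i3: "0 \<le> \<tau> 0 * XX (Suc j)" using tau0 X0 by simp
          have i4: "0 \<le> (1/c1) * XX (Suc j)" using c1 X0 by simp
          have "T * XX (Suc j) = C * XX (Suc j) + (1/c1) * XX (Suc j) + \<tau> 0 * XX (Suc j)"
            unfolding T_def by (simp add: algebra_simps)
          moreover have i5: "0 \<le> C * XX (Suc j)" using C0' c0 X0 by simp
          ultimately have "C \<le> T * XX (Suc j)" "inverse (c1 * gn (Suc j) powr c2) \<le> T * XX (Suc j)"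
            using i1 i2 i3 i4 by linarith+
          then show ?thesis by simp
        qed
        finally show ?thesis .
      qed
      then show ?thesis using that T0 by blast
    next
      case PInf
      have tg: "tau_g c0 C0 c1 c2 (gn (Suc j)) (step_s x j) (zz j) \<le> max (L + Ms) c0"
        if jK: "enat j < K" and h1: "J (x j) \<le> J (x 0)" and h2: "J (x (Suc j)) \<le> J (x 0)" for j
      proof -
        have "norm (zz j) \<le> norm (step_y gJ x j) + norm (blinfun_apply (S (Suc j)) (step_s x j))"
          unfolding zz_def by (rule norm_triangle_ineq4)
        also have "norm (blinfun_apply (S (Suc j)) (step_s x j)) \<le> Ms * norm (step_s x j)"
          using norm_blinfun[of "S (Suc j)" "step_s x j"] SMs[OF leK[OF jK]]
          by (meson mult_right_mono norm_ge_zero order_trans)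
        finally have nz: "norm (zz j) \<le> (L + Ms) * norm (step_s x j)"
          using lipx[OF h1 h2] by (simp add: distrib_right)
        have r: "norm (zz j) / norm (step_s x j) \<le> L + Ms"
        proof (cases "step_s x j = 0")
          case True then show ?thesis using Lp Ms by simp
        next
          case False then show ?thesis using nz by (simp add: divide_le_eq)
        qed
        show ?thesis unfolding tau_g_def projP_inf[OF PInf]
          using r omega_l_le[of c0 c1 c2 "gn (Suc j)"] by (auto simp: le_max_iff_disj)
      qed
      from C0_inf[OF PInf] show ?thesis
      proof (rule disjE)
        assume A1: "\<forall>k. enat k < K \<longrightarrow>
              \<tau> (Suc k) \<le> tau_g c0 C0 c1 c2 (norm (gJ (x (Suc k)))) (step_s x k)
                 (step_y gJ x k - blinfun_apply (S (Suc k)) (step_s x k))"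
        define T where "T = max (L + Ms) c0 + \<tau> 0 + 1"
        have T0: "0 < T" "\<tau> 0 \<le> T" unfolding T_def using tau0 c0 by auto
        have "\<tau> (Suc j) \<le> T * XX (Suc j)"
          if jK: "enat j < K" and h1: "J (x j) \<le> J (x 0)" and h2: "J (x (Suc j)) \<le> J (x 0)" for j
        proof -
          have "\<tau> (Suc j) \<le> max (L + Ms) c0"
            using A1 jK tg[OF jK h1 h2] unfolding zz_def gn_def by force
          also have "\<dots> \<le> T" unfolding T_def using tau0 by linarith
          also have "T \<le> T * XX (Suc j)" using T0 XX1[of "Suc j"] by (simp add: mult_le_cancel_left1)
          finally show ?thesis .
        qed
        then show ?thesis using that T0 by blast
      next
        assume "\<exists>H :: 'a \<Rightarrow> ('a \<Rightarrow>\<^sub>L 'a).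
              (\<forall>z. (gJ has_derivative blinfun_apply (H z)) (at z)) \<and> continuous_on UNIV H \<and>
              (\<forall>k. enat k < K \<longrightarrow>
                 sym_psd (integral {0..1} (\<lambda>t. H (x k + t *\<^sub>R step_s x k)) - S (Suc k))) \<and>
              (\<exists>M. \<forall>k. enat k < K \<longrightarrow>
                 norm (integral {0..1} (\<lambda>t. H (x k + t *\<^sub>R step_s x k)) - S (Suc k)) \<le> M)"
        then obtain H MG where der: "\<forall>z. (gJ has_derivative blinfun_apply (H z)) (at z)"
          and cH: "continuous_on UNIV H"
          and psdG: "\<forall>k. enat k < K \<longrightarrow> sym_psd (integral {0..1} (\<lambda>t. H (x k + t *\<^sub>R step_s x k)) - S (Suc k))"
          and MG: "\<forall>k. enat k < K \<longrightarrow> norm (integral {0..1} (\<lambda>t. H (x k + t *\<^sub>R step_s x k)) - S (Suc k)) \<le> MG"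
          by blast
        define T where "T = max (L + Ms) c0 + max MG c0 + \<tau> 0 + 1"
        have T0: "0 < T" "\<tau> 0 \<le> T" unfolding T_def using tau0 c0 by auto
        have "\<tau> (Suc j) \<le> T * XX (Suc j)"
          if jK: "enat j < K" and h1: "J (x j) \<le> J (x 0)" and h2: "J (x (Suc j)) \<le> J (x 0)" for j
        proof -
          have "\<tau> (Suc j) \<le> max (L + Ms) c0 + max MG c0"
          proof (cases "zz j \<bullet> step_s x j > 0")
            case True
            define Gm where "Gm = integral {0..1} (\<lambda>t. H (x j + t *\<^sub>R step_s x j)) - S (Suc j)"
            have Gs: "blinfun_apply Gm (step_s x j) = zz j"
            proof -
              have "blinfun_apply (integral {0..1} (\<lambda>t. H (x j + t *\<^sub>R step_s x j))) (step_s x j)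
                    = gJ (x j + step_s x j) - gJ (x j)" by (rule hess_z[OF der cH])
              moreover have "x j + step_s x j = x (Suc j)" unfolding step_s_def by simp
              ultimately show ?thesis unfolding Gm_def zz_def step_y_def by (simp add: blinfun.diff_left)
            qed
            have spG: "sym_psd Gm" using psdG jK unfolding Gm_def by blast
            have linG: "linear (blinfun_apply Gm)" by (rule bounded_linear.linear[OF blinfun.bounded_linear_right])
            have symG: "\<forall>u v. blinfun_apply Gm u \<bullet> v = u \<bullet> blinfun_apply Gm v" using spG unfolding sym_psd_def by blast
            have psdG': "\<forall>u. 0 \<le> u \<bullet> blinfun_apply Gm u"
              using spG unfolding sym_psd_def by (metis inner_commute)
            have bdG: "\<forall>u. norm (blinfun_apply Gm u) \<le> norm Gm * norm u" by (simp add: norm_blinfun)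
            have "(norm (blinfun_apply Gm (step_s x j)))\<^sup>2 \<le> norm Gm * (step_s x j \<bullet> blinfun_apply Gm (step_s x j))"
              by (rule psd_norm_sq[OF linG symG psdG' bdG norm_ge_zero])
            then have "(norm (zz j))\<^sup>2 \<le> norm Gm * (zz j \<bullet> step_s x j)" unfolding Gs by (simp add: inner_commute)
            also have "\<dots> \<le> MG * (zz j \<bullet> step_s x j)" using MG jK True unfolding Gm_def
              by (intro mult_right_mono) auto
            finally have "(norm (zz j))\<^sup>2 / (zz j \<bullet> step_s x j) \<le> MG" using True by (simp add: divide_le_eq)
            then have "tau_z c0 C0 c1 c2 (gn (Suc j)) (step_s x j) (zz j) \<le> max MG c0"
              unfolding tau_z_def projP_inf[OF PInf] using omega_l_le[of c0 c1 c2 "gn (Suc j)"] by (auto simp: le_max_iff_disj)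
            moreover have "\<tau> (Suc j) \<le> tau_z c0 C0 c1 c2 (gn (Suc j)) (step_s x j) (zz j)"
              using tup[OF jK] True by simp
            ultimately show ?thesis using c0 max.cobounded2[of c0 "L + Ms"] by linarith
          next
            case False
            then have "\<tau> (Suc j) \<le> tau_g c0 C0 c1 c2 (gn (Suc j)) (step_s x j) (zz j)"
              using tup[OF jK] by simp
            then show ?thesis using tg[OF jK h1 h2] c0 max.cobounded2[of c0 MG] by linarith
          qed
          also have "\<dots> \<le> T" unfolding T_def using tau0 by linarith
          also have "T \<le> T * XX (Suc j)" using T0 XX1[of "Suc j"] by (simp add: mult_le_cancel_left1)
          finally show ?thesis .
        qed
        then show ?thesis using that T0 by blast
      qed
    next
      case MInf then show ?thesis using cC by simp
    qed
  qed
  have TAU_LO: "omega_l c0 c1 c2 (gn (Suc j)) \<le> \<tau> (Suc j)" if "enat j < K" for j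
  proof -
    have "tau_s c0 C0 c1 c2 (gn (Suc j)) (step_s x j)
            (step_y gJ x j - blinfun_apply (S (Suc j)) (step_s x j)) \<le> \<tau> (Suc j)"
      using tau_choice[OF that] unfolding tau_admissible_def gn_def by blast
    moreover have "omega_l c0 c1 c2 (gn (Suc j)) \<le> tau_s c0 C0 c1 c2 (gn (Suc j)) (step_s x j)
            (step_y gJ x j - blinfun_apply (S (Suc j)) (step_s x j))"
      unfolding tau_s_def by (rule projP_ge[OF cC])
    ultimately show ?thesis by linarith
  qed
  have tau_nn: "0 \<le> \<tau> k" if "enat k \<le> K" for k
  proof (cases k)
    case 0 then show ?thesis using tau0 by simp
  next
    case (Suc j)
    then have "enat j < K" using ltK that by simp
    then show ?thesis using TAU_LO[of j] omega_l_nonneg[OF c0, of c1 c2 "gn (Suc j)"] c1 Suc by simp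
  qed
  obtain Mc where Mc: "1 \<le> Mc"
    and Mc0: "\<And>k v. c0 = 0 \<Longrightarrow> enat k \<le> K \<Longrightarrow> norm v \<le> Mc * norm (slbfgs_B0 \<tau> S k v)"
  proof (cases "c0 = 0")
    case True
    then obtain M' where M': "\<forall>k. enat k \<le> K \<longrightarrow> (\<forall>v. norm v \<le> M' * norm (slbfgs_B0 \<tau> S k v))"
      using c0_zero by blast
    have "norm v \<le> max M' 1 * norm (slbfgs_B0 \<tau> S k v)" if "enat k \<le> K" for k v
      using M' that by (meson max.cobounded1 mult_right_mono norm_ge_zero order_trans)
    then show ?thesis using that[of "max M' 1"] by simp
  next
    case False
    then show ?thesis using that[of 1] by simp
  qed
  define a where "a = (if c0 = 0 then 1/(Mc\<^sup>2 * (T+Ms)) else min c0 c1)"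
  have a0: "0 < a" unfolding a_def using Mc T Ms c0 c1 by auto
  define clo where "clo = kap^ell * min (min a (\<tau> 0)) (cs/4)"
  define chi where "chi = 2^ell * ((T + Ms) + L\<^sup>2/cs)"
  have clo0: "0 < clo" unfolding clo_def using kap a0 tau0 cs by simp
  have chi0: "0 < chi" unfolding chi_def using T Ms cs by (simp add: add_pos_nonneg)
  have STEP: "\<exists>mu La. inv_op (slbfgs_B cs ell gJ x \<tau> S k) mu La \<and>
                 (0 < gn k \<longrightarrow> clo * mm k \<le> mu \<and> La \<le> chi * XX k)"
    if kK: "enat k \<le> K" and hyp: "\<forall>i\<le>k. J (x i) \<le> J (x 0)" for k
  proof -
    have sp: "sym_psd (S k)" using S_sym_psd[OF kK] .
    have tk0: "0 \<le> \<tau> k" using tau_nn[OF kK] .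
    note B0 = B0_basic[where S=S and k=k and \<tau>=\<tau> and Ms=Ms, OF sp SMs[OF kK] tk0]
    define mu0 where "mu0 = (if k = 0 then \<tau> 0 else a * mm k)"
    define La0 where "La0 = \<tau> k + Ms"
    have La0n: "0 \<le> La0" unfolding La0_def using tk0 Ms by simp
    have tauT: "\<tau> k \<le> T * XX k" if "0 < k"
    proof (cases k)
      case 0 then show ?thesis using that by simp
    next
      case (Suc j)
      have "enat (Suc j) \<le> K" using kK Suc by simp
      then have jK: "enat j < K" by (rule ltK)
      have h: "J (x j) \<le> J (x 0)" "J (x (Suc j)) \<le> J (x 0)" using hyp Suc by auto
      show ?thesis using TAU_HI[OF jK h] Suc by simp
    qed
    have La0b: "La0 \<le> (T + Ms) * XX k"
    proof (cases "k = 0")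
      case True
      have "T \<le> T * XX k" using T(1) XX1[of k] by (simp add: mult_le_cancel_left1)
      then have "\<tau> k \<le> T * XX k" using True T(2) by simp
      moreover have "Ms \<le> Ms * XX k" using Ms XX1[of k] by (simp add: mult_le_cancel_left1)
      ultimately show ?thesis unfolding La0_def by (simp add: distrib_right)
    next
      case False
      have "\<tau> k \<le> T * XX k" using tauT False by simp
      moreover have "Ms \<le> Ms * XX k" using Ms XX1[of k] by (simp add: mult_le_cancel_left1)
      ultimately show ?thesis unfolding La0_def by (simp add: distrib_right)
    qed
    have gk: "0 < gn k" if "0 < k"
    proof -
      have "\<exists>j. k = Suc j" using that by (simp add: gr0_conv_Suc)
      then obtain j where kj: "k = Suc j" by (elim exE)
      then have "enat j < K" using ltK[of j] kK by simp
      then show ?thesis using gpos[of j] kj by simp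
    qed
    have mu0p: "0 < mu0"
    proof (cases "k = 0")
      case True then show ?thesis unfolding mu0_def using tau0 by simp
    next
      case False
      then have "0 < gn k" using gk by simp
      then have "0 < mm k" unfolding mm_def by simp
      then show ?thesis unfolding mu0_def using False a0 by simp
    qed
    have mu0q: "\<forall>u. mu0 * (norm u)\<^sup>2 \<le> u \<bullet> slbfgs_B0 \<tau> S k u"
    proof (cases "k = 0")
      case True then show ?thesis unfolding mu0_def using B0(3) by simp
    next
      case False
      then obtain j where kj: "k = Suc j" using not0_implies_Suc by blast
      have "enat (Suc j) \<le> K" using kK kj by simp
      then have jK: "enat j < K" by (rule ltK)
      have G: "0 < gn k" using gk False by simp
      have mX: "mm k * XX k = 1" unfolding mm_def XX_def by (rule mX_one[OF G])
      show ?thesis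
      proof (cases "c0 = 0")
        case True
        have aeq: "a * (Mc\<^sup>2 * (T + Ms)) = 1" unfolding a_def using True Mc T Ms by simp
        show ?thesis
        proof
          fix u :: 'a
          have n1: "norm u \<le> Mc * norm (slbfgs_B0 \<tau> S k u)" using Mc0[OF True kK] .
          have n2: "(norm (slbfgs_B0 \<tau> S k u))\<^sup>2 \<le> (\<tau> k + Ms) * (u \<bullet> slbfgs_B0 \<tau> S k u)"
            by (rule psd_norm_sq[OF B0(1) B0(2) B0(5) B0(4)]) (use tk0 Ms in simp)
          have q0: "0 \<le> u \<bullet> slbfgs_B0 \<tau> S k u" using B0(5) by blast
          have "(norm u)\<^sup>2 \<le> (Mc * norm (slbfgs_B0 \<tau> S k u))\<^sup>2" using n1 by (simp add: power_mono)
          also have "\<dots> = Mc\<^sup>2 * (norm (slbfgs_B0 \<tau> S k u))\<^sup>2" by (simp add: power_mult_distrib)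
          also have "\<dots> \<le> Mc\<^sup>2 * ((\<tau> k + Ms) * (u \<bullet> slbfgs_B0 \<tau> S k u))"
            using n2 by (intro mult_left_mono) auto
          also have "\<dots> \<le> Mc\<^sup>2 * (((T + Ms) * XX k) * (u \<bullet> slbfgs_B0 \<tau> S k u))"
            using La0b q0 unfolding La0_def by (intro mult_left_mono mult_right_mono) auto
          finally have h: "(norm u)\<^sup>2 \<le> Mc\<^sup>2 * (T + Ms) * XX k * (u \<bullet> slbfgs_B0 \<tau> S k u)"
            by (simp add: mult.assoc)
          have "a * mm k * (norm u)\<^sup>2 \<le> a * mm k * (Mc\<^sup>2 * (T + Ms) * XX k * (u \<bullet> slbfgs_B0 \<tau> S k u))"
            using h a0 mm0[of k] by (intro mult_left_mono) auto
          also have "\<dots> = (a * (Mc\<^sup>2 * (T + Ms))) * (mm k * XX k) * (u \<bullet> slbfgs_B0 \<tau> S k u)"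
            by (simp add: algebra_simps)
          also have "\<dots> = u \<bullet> slbfgs_B0 \<tau> S k u" using aeq mX by simp
          finally show "mu0 * (norm u)\<^sup>2 \<le> u \<bullet> slbfgs_B0 \<tau> S k u" unfolding mu0_def using False by simp
        qed
      next
        case False
        have aeq: "a = min c0 c1" unfolding a_def using False by simp
        have "a * mm k \<le> omega_l c0 c1 c2 (gn k)"
          unfolding aeq mm_def omega_l_def by (rule min_prod_le) (use c0 c1 in auto)
        also have "\<dots> \<le> \<tau> k" using TAU_LO[OF jK] kj by simp
        finally have at: "a * mm k \<le> \<tau> k" .
        show ?thesis
        proof
          fix u :: 'a
          have "a * mm k * (norm u)\<^sup>2 \<le> \<tau> k * (norm u)\<^sup>2" using at by (intro mult_right_mono) auto
          also have "\<dots> \<le> u \<bullet> slbfgs_B0 \<tau> S k u" using B0(3) by blast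
          finally show "mu0 * (norm u)\<^sup>2 \<le> u \<bullet> slbfgs_B0 \<tau> S k u" unfolding mu0_def using \<open>k \<noteq> 0\<close> by simp
        qed
      qed
    qed
    have inv0: "inv_op (slbfgs_B0 \<tau> S k) mu0 La0"
      unfolding inv_op_def La0_def using B0(1,2,4) mu0q mu0p tk0 Ms by auto
    define js where "js = stored_pairs cs ell (step_s x) (step_y gJ x) k"
    have pairs: "\<forall>j\<in>set js. cs * (norm (step_s x j))\<^sup>2 < step_y gJ x j \<bullet> step_s x j \<and>
                   norm (step_y gJ x j) \<le> L * norm (step_s x j)"
    proof
      fix j assume "j \<in> set js"
      then have jk: "j < k" and c: "cs * (norm (step_s x j))\<^sup>2 < step_y gJ x j \<bullet> step_s x j"
        unfolding js_def stored_pairs_def by auto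
      have "J (x j) \<le> J (x 0)" "J (x (Suc j)) \<le> J (x 0)" using hyp jk by auto
      then show "cs * (norm (step_s x j))\<^sup>2 < step_y gJ x j \<bullet> step_s x j \<and>
                   norm (step_y gJ x j) \<le> L * norm (step_s x j)" using c lipx by blast
    qed
    have lenjs: "length js \<le> ell"
    proof -
      have "length js \<le> length [k - ell..<k]" unfolding js_def stored_pairs_def by (rule length_filter_le)
      then show ?thesis by simp
    qed
    have invk: "inv_op (slbfgs_B cs ell gJ x \<tau> S k) (kap^length js * min mu0 (cs/4)) (2^length js * (La0 + L\<^sup>2/cs))"
      unfolding slbfgs_B_def js_def[symmetric] kap_def
      using foldl_inv[OF inv0 cs less_imp_le[OF Lp] pairs] by simp
    show ?thesis
    proof (intro exI conjI impI)
      show "inv_op (slbfgs_B cs ell gJ x \<tau> S k) (kap^length js * min mu0 (cs/4)) (2^length js * (La0 + L\<^sup>2/cs))"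
        by (rule invk)
      assume "0 < gn k"
      define q where "q = min (min a (\<tau> 0)) (cs/4)"
      have q0: "0 \<le> q" unfolding q_def using a0 tau0 cs by simp
      have qm: "q * mm k \<le> min mu0 (cs/4)"
      proof -
        have "q * mm k \<le> q" using q0 mm1[of k] by (simp add: mult_left_le)
        moreover have "q \<le> cs/4" unfolding q_def by simp
        moreover have "q * mm k \<le> mu0"
        proof (cases "k = 0")
          case True
          have "q \<le> \<tau> 0" unfolding q_def by simp
          then show ?thesis unfolding mu0_def using True \<open>q * mm k \<le> q\<close> by simp
        next
          case False
          have "q \<le> a" unfolding q_def by simp
          then have "q * mm k \<le> a * mm k" using mm0[of k] by (intro mult_right_mono) auto
          then show ?thesis unfolding mu0_def using False by simp
        qed
        ultimately show ?thesis by simp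
      qed
      have kp: "kap^ell \<le> kap^length js" using kap lenjs by (intro power_decreasing) auto
      have "clo * mm k = kap^ell * (q * mm k)" unfolding clo_def q_def by (simp add: mult.assoc)
      also have "\<dots> \<le> kap^length js * min mu0 (cs/4)"
        using kp qm q0 mm0[of k] kap by (intro mult_mono) auto
      finally show "clo * mm k \<le> kap^length js * min mu0 (cs/4)" .
      have tp: "(2::real)^length js \<le> 2^ell" using lenjs by (intro power_increasing) auto
      have "L\<^sup>2/cs * 1 \<le> L\<^sup>2/cs * XX k" using XX1[of k] cs by (intro mult_left_mono) auto
      then have "La0 + L\<^sup>2/cs \<le> (T + Ms) * XX k + L\<^sup>2/cs * XX k"
        using La0b by linarith
      also have "\<dots> = ((T + Ms) + L\<^sup>2/cs) * XX k" by (simp add: algebra_simps)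
      finally have lb: "La0 + L\<^sup>2/cs \<le> ((T + Ms) + L\<^sup>2/cs) * XX k" .
      have "2^length js * (La0 + L\<^sup>2/cs) \<le> 2^ell * (((T + Ms) + L\<^sup>2/cs) * XX k)"
        using tp lb La0n cs by (intro mult_mono) auto
      then show "2^length js * (La0 + L\<^sup>2/cs) \<le> chi * XX k" unfolding chi_def by (simp add: mult.assoc)
    qed
  qed
  have DESC: "J (x (Suc k)) \<le> J (x k)"
    if kK: "enat k \<le> K" and hyp: "\<forall>i\<le>k. J (x i) \<le> J (x 0)" for k
  proof -
    obtain mu La where inv: "inv_op (slbfgs_B cs ell gJ x \<tau> S k) mu La" using STEP[OF kK hyp] by blast
    have "mu * (norm (d k))\<^sup>2 \<le> d k \<bullet> slbfgs_B cs ell gJ x \<tau> S k (d k)" and mu: "0 < mu"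
      using inv unfolding inv_op_def by auto
    then have "0 \<le> d k \<bullet> slbfgs_B cs ell gJ x \<tau> S k (d k)"
      by (meson mult_nonneg_nonneg order_trans less_imp_le zero_le_power2)
    then have gd: "gJ (x k) \<bullet> d k \<le> 0" using dir[OF kK] by (simp add: inner_commute)
    have A: "0 < \<alpha> k" "armijo J gJ \<sigma> (x k) (d k) (\<alpha> k)" using ARM[OF kK] by auto
    have "J (x (Suc k)) \<le> J (x k) + \<alpha> k * \<sigma> * (gJ (x k) \<bullet> d k)"
      using A(2) update[OF kK] unfolding armijo_def by simp
    moreover have "\<alpha> k * \<sigma> * (gJ (x k) \<bullet> d k) \<le> 0"
      using A(1) sig gd by (simp add: mult_nonneg_nonpos)
    ultimately show ?thesis by linarith
  qed
  have OMEGA: "\<forall>i\<le>Suc k. J (x i) \<le> J (x 0)" if "enat k \<le> K" for k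
    using that
  proof (induction k)
    case 0
    have "J (x 1) \<le> J (x 0)" using DESC[of 0] 0 by simp
    then show ?case by (auto simp: le_Suc_eq)
  next
    case (Suc k)
    then have "enat k \<le> K" using ltK less_imp_le by blast
    then have IH: "\<forall>i\<le>Suc k. J (x i) \<le> J (x 0)" using Suc.IH by blast
    have "J (x (Suc (Suc k))) \<le> J (x (Suc k))" using DESC[OF Suc.prems IH] .
    then have "J (x (Suc (Suc k))) \<le> J (x 0)" using IH by force
    then show ?case using IH by (auto simp: le_Suc_eq)
  qed
  have hypall: "\<forall>i\<le>k. J (x i) \<le> J (x 0)" if "enat k \<le> K" for k
    using OMEGA[OF that] by auto
  show ?thesis
  proof (intro exI conjI allI impI)
    show "0 < 1/chi" using chi0 by simp
    show "0 < max (1/clo) (chi/clo)" using clo0 by (auto simp: less_max_iff_disj)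
    fix k assume kK: "enat k \<le> K"
    obtain mu La where inv: "inv_op (slbfgs_B cs ell gJ x \<tau> S k) mu La"
      and bnds: "0 < gn k \<longrightarrow> clo * mm k \<le> mu \<and> La \<le> chi * XX k"
      using STEP[OF kK hypall[OF kK]] by blast
    have "(1/chi * min 1 (norm (gJ (x k)) powr c2) \<le> norm (d k) / norm (gJ (x k)) \<and>
         norm (d k) / norm (gJ (x k)) \<le> max (1/clo) (chi/clo) * max 1 (norm (gJ (x k)) powr (- c2))) \<and>
         inverse (max (1/clo) (chi/clo)) * norm (gJ (x k)) * min 1 (norm (gJ (x k)) powr (2 * c2))
             \<le> \<bar>gJ (x k) \<bullet> d k\<bar> / norm (d k)"
    proof (cases "gn k = 0")
      case True
      then have "gJ (x k) = 0" unfolding gn_def by simp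
      then show ?thesis using chi0 clo0 by (simp add: le_max_iff_disj)
    next
      case False
      then have gp: "0 < norm (gJ (x k))" unfolding gn_def by simp
      have b: "clo * min 1 (norm (gJ (x k)) powr c2) \<le> mu" "La \<le> chi * max 1 (norm (gJ (x k)) powr (- c2))"
        using bnds False gp unfolding mm_def XX_def gn_def by auto
      show ?thesis using final_ineq[OF gp inv dir[OF kK] clo0 chi0 b] by simp
    qed
    then show "1/chi * min 1 (norm (gJ (x k)) powr c2) \<le> norm (d k) / norm (gJ (x k))"
      "norm (d k) / norm (gJ (x k)) \<le> max (1/clo) (chi/clo) * max 1 (norm (gJ (x k)) powr (- c2))"
      "inverse (max (1/clo) (chi/clo)) * norm (gJ (x k)) * min 1 (norm (gJ (x k)) powr (2 * c2))
             \<le> \<bar>gJ (x k) \<bullet> d k\<bar> / norm (d k)" by auto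
  qed
qed

end
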